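(* Assume (A1) $\mu_k\sim1/k^2$ and (A2) $\nabla L$ is $M$-Lipschitz. Then $$\int L\,d\pi-L(\tilde x)\lesssim\frac1\beta\Big(\sqrt{\frac{2M}{\lambda}}+1\Big)+\lambda\Big(\frac{\|\tilde x\|_{\mathcal H_K}}{\sqrt\beta}+\|\tilde x\|_{\mathcal H_K}^2\Big).$$
   Context: Let $\mathcal H$ be a separable real Hilbert space with orthonormal basis $(f_k)_{k\ge0}$ and $\mu_0\ge\mu_1\ge\cdots>0$. $\mathcal H_K=\{\sum_k\alpha_kf_k:\sum_k\alpha_k^2/\mu_k<\infty\}$ with $\|\sum_k\alpha_kf_k\|_{\mathcal H_K}^2=\sum_k\alpha_k^2/\mu_k$. Fix $\lambda>0$, $\beta>0$; $A$ is the diagonal operator $Af_k=-(\lambda/\mu_k)f_k$. $L:\mathcal H\to\mathbb R$ is Fréchet differentiable and $\tilde x$ is a global minimizer of $L(x)+\frac\lambda2\|x\|_{\mathcal H_K}^2$. $\pi$ is the Gibbs measure $\frac{d\pi}{d\nu_\beta}(x)\propto\exp(-\beta L(x))$, where $\nu_\beta$ is the centered Gaussian measure on $\mathcal H$ with covariance operator $(-\beta A)^{-1}$ (the invariant law of $dX=(AX-\nabla L(X))dt+\sqrt{2/\beta}\,dW$). $\lesssim$ denotes inequality up to a positive multiplicative constant. *)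

theory Defs
  imports "HOL-Probability.Probability"
begin

definition orthonormal_basis :: "(nat \<Rightarrow> 'a::{real_inner,complete_space}) \<Rightarrow> bool" where
  "orthonormal_basis f \<longleftrightarrow>
     (\<forall>i j. inner (f i) (f j) = (if i = j then 1 else 0)) \<and> closure (span (range f)) = UNIV"

text \<open>RKHS H_K: x = sum_k alpha_k f_k with sum alpha_k^2/mu_k finite; squared norm.\<close>
definition in_HK :: "(nat \<Rightarrow> real) \<Rightarrow> (nat \<Rightarrow> 'a::{real_inner,complete_space}) \<Rightarrow> 'a \<Rightarrow> bool" where
  "in_HK \<mu> f x \<longleftrightarrow> summable (\<lambda>k. (inner x (f k))\<^sup>2 / \<mu> k)"

definition HK_norm :: "(nat \<Rightarrow> real) \<Rightarrow> (nat \<Rightarrow> 'a::{real_inner,complete_space}) \<Rightarrow> 'a \<Rightarrow> real" where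
  "HK_norm \<mu> f x = sqrt (\<Sum>k. (inner x (f k))\<^sup>2 / \<mu> k)"

text \<open>Centered Gaussian measure nu_beta on H with covariance (-beta A)^{-1}, where
  A f_k = -(lambda/mu_k) f_k; i.e. covariance eigenvalues mu_k/(beta*lambda) on f_k.\<close>
definition gauss_ref ::
  "(nat \<Rightarrow> real) \<Rightarrow> (nat \<Rightarrow> 'a::{real_inner,complete_space}) \<Rightarrow> real \<Rightarrow> real \<Rightarrow> 'a measure" where
  "gauss_ref \<mu> f lam \<beta> =
     distr (PiM (UNIV :: nat set) (\<lambda>_. density lborel std_normal_density)) borel
       (\<lambda>\<omega>. \<Sum>k. (sqrt (\<mu> k / (\<beta> * lam)) * \<omega> k) *\<^sub>R f k)"

definition gibbs ::
  "(nat \<Rightarrow> real) \<Rightarrow> (nat \<Rightarrow> 'a::{real_inner,complete_space}) \<Rightarrow> real \<Rightarrow> real \<Rightarrow> ('a \<Rightarrow> real) \<Rightarrow> 'a measure" where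
  "gibbs \<mu> f lam \<beta> L =
     density (gauss_ref \<mu> f lam \<beta>)
       (\<lambda>x. ennreal (exp (- \<beta> * L x) / (\<integral>y. exp (- \<beta> * L y) \<partial>gauss_ref \<mu> f lam \<beta>)))"

end

theory Submission
  imports Defs
begin


lemma onb_inner: "orthonormal_basis f \<Longrightarrow> inner (f i) (f j) = (if i = j then 1 else 0)"
  by (simp add: orthonormal_basis_def)

lemma on_norm_sum:
  assumes "\<And>i j. inner (f i) (f j) = (if i = j then 1 else (0::real))"
  and "finite A"
  shows "(norm (\<Sum>k\<in>A. y k *\<^sub>R f k))\<^sup>2 = (\<Sum>k\<in>A. (y k)\<^sup>2)"
proof -
  have e: "inner (f j) (\<Sum>k\<in>A. y k *\<^sub>R f k) = (if j \<in> A then y j else 0)" for j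
  proof -
    have "inner (f j) (\<Sum>k\<in>A. y k *\<^sub>R f k) = (\<Sum>k\<in>A. y k * inner (f j) (f k))"
      by (simp add: inner_sum_right)
    also have "\<dots> = (\<Sum>k\<in>A. if k = j then y j else 0)"
      by (rule sum.cong) (auto simp: assms(1))
    finally show ?thesis using assms(2) by simp
  qed
  have "(norm (\<Sum>k\<in>A. y k *\<^sub>R f k))\<^sup>2 = inner (\<Sum>k\<in>A. y k *\<^sub>R f k) (\<Sum>k\<in>A. y k *\<^sub>R f k)"
    by (simp add: power2_norm_eq_inner)
  also have "\<dots> = (\<Sum>i\<in>A. y i * inner (f i) (\<Sum>k\<in>A. y k *\<^sub>R f k))"
    by (simp add: inner_sum_left)
  also have "\<dots> = (\<Sum>i\<in>A. (y i)\<^sup>2)"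
    by (rule sum.cong) (auto simp: e power2_eq_square)
  finally show ?thesis .
qed

lemma on_inner_sum:
  assumes "\<And>i j. inner (f i) (f j) = (if i = j then 1 else (0::real))"
  and "finite A" "j \<in> A"
  shows "inner (\<Sum>k\<in>A. y k *\<^sub>R f k) (f j) = y j"
proof -
  have "inner (\<Sum>k\<in>A. y k *\<^sub>R f k) (f j) = (\<Sum>k\<in>A. y k * inner (f k) (f j))"
    by (simp add: inner_sum_left)
  also have "\<dots> = (\<Sum>k\<in>A. if k = j then y j else 0)"
    by (rule sum.cong) (auto simp: assms(1))
  finally show ?thesis using assms(2,3) by simp
qed

lemma bessel_partial:
  fixes f :: "nat \<Rightarrow> 'a::real_inner"
  assumes "\<And>i j. inner (f i) (f j) = (if i = j then 1 else (0::real))"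
  shows "(\<Sum>k<n. (inner x (f k))\<^sup>2) \<le> (norm x)\<^sup>2"
proof -
  let ?p = "\<Sum>k<n. inner x (f k) *\<^sub>R f k"
  have i1: "inner x ?p = (\<Sum>k<n. (inner x (f k))\<^sup>2)"
    by (simp add: inner_sum_right power2_eq_square)
  have i2: "inner ?p ?p = (\<Sum>k<n. (inner x (f k))\<^sup>2)"
    using on_norm_sum[OF assms finite_lessThan[of n], of "\<lambda>k. inner x (f k)"] by (simp add: power2_norm_eq_inner)
  have "0 \<le> inner (x - ?p) (x - ?p)" by simp
  also have "\<dots> = inner x x - 2 * inner x ?p + inner ?p ?p"
    by (simp add: inner_diff_left inner_diff_right inner_commute)
  finally show ?thesis using i1 i2 by (simp add: power2_norm_eq_inner)
qed

lemma bessel_summable: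
  fixes f :: "nat \<Rightarrow> 'a::real_inner"
  assumes "\<And>i j. inner (f i) (f j) = (if i = j then 1 else (0::real))"
  shows "summable (\<lambda>k. (inner x (f k))\<^sup>2)"
  by (rule summableI_nonneg_bounded[where x="(norm x)\<^sup>2"]) (auto intro: bessel_partial[OF assms])

lemma on_summable:
  fixes f :: "nat \<Rightarrow> 'a::{real_inner,complete_space}"
  assumes on: "\<And>i j. inner (f i) (f j) = (if i = j then 1 else (0::real))"
  and s: "summable (\<lambda>k. (y k)\<^sup>2)"
  shows "summable (\<lambda>k. y k *\<^sub>R f k)"
proof -
  let ?S = "\<lambda>n. \<Sum>k<n. y k *\<^sub>R f k"
  have d: "dist (?S m) (?S n) = sqrt (\<Sum>k\<in>{n..<m}. (y k)\<^sup>2)" if "n \<le> m" for m n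
  proof -
    have "?S m - ?S n = (\<Sum>k\<in>{n..<m}. y k *\<^sub>R f k)"
      using that by (metis sum_diff_nat_ivl lessThan_atLeast0 zero_le)
    then show ?thesis using on_norm_sum[OF on finite_atLeastLessThan, of y n m]
      by (simp add: dist_norm real_sqrt_unique)
  qed
  have "Cauchy ?S"
  proof (rule metric_CauchyI)
    fix e :: real assume e: "e > 0"
    from s have "\<exists>N. \<forall>m\<ge>N. \<forall>n. norm (sum (\<lambda>k. (y k)\<^sup>2) {m..<n}) < e\<^sup>2"
      using e by (subst (asm) summable_Cauchy) auto
    then obtain N where N: "\<And>m n. m \<ge> N \<Longrightarrow> norm (sum (\<lambda>k. (y k)\<^sup>2) {m..<n}) < e\<^sup>2" by blast
    have "dist (?S m) (?S n) < e" if "m \<ge> N" "n \<ge> N" for m n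
    proof (cases "n \<le> m")
      case True
      have "sqrt (\<Sum>k\<in>{n..<m}. (y k)\<^sup>2) < sqrt (e\<^sup>2)"
        using N[of n m] that by (intro real_sqrt_less_mono) auto
      then show ?thesis using d[OF True] e by simp
    next
      case False
      have "sqrt (\<Sum>k\<in>{m..<n}. (y k)\<^sup>2) < sqrt (e\<^sup>2)"
        using N[of m n] that by (intro real_sqrt_less_mono) auto
      then show ?thesis using d[of m n] False e by (simp add: dist_commute)
    qed
    then show "\<exists>N. \<forall>m\<ge>N. \<forall>n\<ge>N. dist (?S m) (?S n) < e" by blast
  qed
  then show ?thesis unfolding summable_def sums_def using Cauchy_convergent convergent_def by blast
qed

lemma on_sums_norm:
  fixes f :: "nat \<Rightarrow> 'a::{real_inner,complete_space}"
  assumes on: "\<And>i j. inner (f i) (f j) = (if i = j then 1 else (0::real))"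
  and s: "(\<lambda>k. y k *\<^sub>R f k) sums v"
  shows "(\<lambda>k. (y k)\<^sup>2) sums (norm v)\<^sup>2"
proof -
  have "(\<lambda>n. (norm (\<Sum>k<n. y k *\<^sub>R f k))\<^sup>2) \<longlonglongrightarrow> (norm v)\<^sup>2"
    using s unfolding sums_def by (intro tendsto_intros)
  then show ?thesis unfolding sums_def using on_norm_sum[OF on] by simp
qed

lemma on_sums_inner:
  fixes f :: "nat \<Rightarrow> 'a::{real_inner,complete_space}"
  assumes s: "(\<lambda>k. y k *\<^sub>R f k) sums v"
  shows "(\<lambda>k. y k * inner u (f k)) sums (inner u v)"
proof -
  have "(\<lambda>k. inner u (y k *\<^sub>R f k)) sums (inner u v)"
    by (rule bounded_linear.sums[OF bounded_linear_inner_right s])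
  then show ?thesis by simp
qed

lemma onb_expansion:
  fixes f :: "nat \<Rightarrow> 'a::{real_inner,complete_space}"
  assumes onb: "orthonormal_basis f"
  shows "(\<lambda>k. inner x (f k) *\<^sub>R f k) sums x"
proof -
  have on: "\<And>i j. inner (f i) (f j) = (if i = j then 1 else (0::real))"
    using onb by (simp add: orthonormal_basis_def)
  have "summable (\<lambda>k. inner x (f k) *\<^sub>R f k)"
    by (rule on_summable[OF on bessel_summable[OF on]])
  then obtain y where y: "(\<lambda>k. inner x (f k) *\<^sub>R f k) sums y" by (auto simp: summable_def)
  have orth: "inner (x - y) (f j) = 0" for j
  proof -
    have "(\<lambda>k. inner x (f k) * inner (f j) (f k)) sums (inner (f j) y)"
      by (rule on_sums_inner[OF y])
    moreover have "(\<lambda>k. inner x (f k) * inner (f j) (f k)) sums (inner x (f j))"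
    proof -
      have "(\<lambda>k. inner x (f k) * inner (f j) (f k)) = (\<lambda>k. if k = j then inner x (f j) else 0)"
        by (auto simp: on)
      then show ?thesis using sums_single[of j "\<lambda>_. inner x (f j)"] by simp
    qed
    ultimately have "inner (f j) y = inner x (f j)" using sums_unique2 by blast
    then show ?thesis by (simp add: inner_diff_left inner_diff_right inner_commute)
  qed
  have "span (range f) \<subseteq> {z. inner (x - y) z = 0}"
  proof (rule span_minimal)
    show "range f \<subseteq> {z. inner (x - y) z = 0}" using orth by (auto simp: inner_commute)
    show "subspace {z. inner (x - y) z = 0}"
      by (auto simp: subspace_def inner_add_right)
  qed
  moreover have "closed {z. inner (x - y) z = 0}"
    by (intro closed_Collect_eq continuous_intros)
  ultimately have "closure (span (range f)) \<subseteq> {z. inner (x - y) z = 0}"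
    by (rule closure_minimal)
  then have "inner (x - y) (x - y) = 0" using onb unfolding orthonormal_basis_def by blast
  then have "x = y" by simp
  with y show ?thesis by simp
qed

lemma taylor_upper:
  fixes L :: "'a::real_inner \<Rightarrow> real"
  assumes der: "\<And>x. (L has_derivative (\<lambda>h. inner (gL x) h)) (at x)"
  and lip: "M-lipschitz_on UNIV gL"
  shows "L y \<le> L x + inner (gL x) (y - x) + M / 2 * (norm (y - x))\<^sup>2"
proof -
  define d where "d = y - x"
  define u where "u t = L (x + t *\<^sub>R d) - t * inner (gL x) d - M / 2 * t\<^sup>2 * (norm d)\<^sup>2" for t :: real
  have du: "(u has_real_derivative (inner (gL (x + t *\<^sub>R d)) d - inner (gL x) d - M * t * (norm d)\<^sup>2)) (at t)" for t
  proof -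
    have "((\<lambda>t. x + t *\<^sub>R d) has_derivative (\<lambda>h. h *\<^sub>R d)) (at t)"
      by (auto intro!: derivative_eq_intros)
    from has_derivative_compose[OF this der]
    have "((\<lambda>t. L (x + t *\<^sub>R d)) has_derivative (\<lambda>h. inner (gL (x + t *\<^sub>R d)) (h *\<^sub>R d))) (at t)" .
    moreover have "(\<lambda>h. inner (gL (x + t *\<^sub>R d)) (h *\<^sub>R d)) = (*) (inner (gL (x + t *\<^sub>R d)) d)"
      by (auto simp: mult.commute)
    ultimately have "((\<lambda>t. L (x + t *\<^sub>R d)) has_real_derivative inner (gL (x + t *\<^sub>R d)) d) (at t)"
      by (simp add: has_field_derivative_def)
    then show ?thesis unfolding u_def
      by (auto intro!: derivative_eq_intros)
  qed
  have nonpos: "inner (gL (x + t *\<^sub>R d)) d - inner (gL x) d - M * t * (norm d)\<^sup>2 \<le> 0" if "0 \<le> t" for t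
  proof -
    have "inner (gL (x + t *\<^sub>R d)) d - inner (gL x) d = inner (gL (x + t *\<^sub>R d) - gL x) d"
      by (simp add: inner_diff_left)
    also have "\<dots> \<le> norm (gL (x + t *\<^sub>R d) - gL x) * norm d" by (rule norm_cauchy_schwarz)
    also have "norm (gL (x + t *\<^sub>R d) - gL x) \<le> M * norm (t *\<^sub>R d)"
      using lipschitz_onD[OF lip, of "x + t *\<^sub>R d" x] by (simp add: dist_norm)
    then have "norm (gL (x + t *\<^sub>R d) - gL x) * norm d \<le> M * norm (t *\<^sub>R d) * norm d"
      by (simp add: mult_right_mono)
    also have "\<dots> = M * t * (norm d)\<^sup>2" using that by (simp add: power2_eq_square)
    finally show ?thesis by simp
  qed
  have "u 1 \<le> u 0"
    using DERIV_nonpos_imp_nonincreasing[of 0 1 u] du nonpos by force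
  then show ?thesis by (simp add: u_def d_def)
qed


abbreviation SN :: "real measure" where "SN \<equiv> density lborel std_normal_density"
abbreviation PP :: "(nat \<Rightarrow> real) measure" where "PP \<equiv> PiM UNIV (\<lambda>_. SN)"

lemma prob_SN: "prob_space SN"
  using prob_space_normal_density[of 1 0] by simp

lemma pps: "product_prob_space (\<lambda>_::nat. SN)"
  by (rule product_prob_spaceI) (rule prob_SN)

lemma prob_PP: "prob_space PP"
  by (rule prob_space_PiM) (rule prob_SN)

lemma prodPP:
  fixes h :: "nat \<Rightarrow> real \<Rightarrow> real"
  assumes K: "finite K" and h: "\<And>i. i \<in> K \<Longrightarrow> integrable SN (h i)"
  shows "integrable PP (\<lambda>\<omega>. \<Prod>i\<in>K. h i (\<omega> i))"
    and "(\<integral>\<omega>. (\<Prod>i\<in>K. h i (\<omega> i)) \<partial>PP) = (\<Prod>i\<in>K. \<integral>t. h i t \<partial>SN)"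
proof -
  interpret product_prob_space "\<lambda>_::nat. SN" UNIV by (rule pps)
  have D: "distr PP (PiM K (\<lambda>_. SN)) (\<lambda>x. restrict x K) = PiM K (\<lambda>_. SN)"
    using K by (intro distr_PiM_restrict_finite) auto
  have hm[measurable]: "h i \<in> borel_measurable SN" if "i \<in> K" for i using h[OF that] by auto
  have Fm: "(\<lambda>x. \<Prod>i\<in>K. h i (x i)) \<in> borel_measurable (PiM K (\<lambda>_. SN))"
  proof (rule borel_measurable_prod[where f="\<lambda>i x. h i (x i)"])
    fix i assume i: "i \<in> K"
    show "(\<lambda>x. h i (x i)) \<in> borel_measurable (PiM K (\<lambda>_. SN))"
      using measurable_compose[OF measurable_component_singleton[OF i] hm[OF i]] by simp
  qed
  have R: "(\<lambda>x. restrict x K) \<in> measurable PP (PiM K (\<lambda>_. SN))"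
    by (rule measurable_restrict_subset) auto
  have eq: "(\<Prod>i\<in>K. h i (restrict \<omega> K i)) = (\<Prod>i\<in>K. h i (\<omega> i))" for \<omega>
    by (rule prod.cong) auto
  have I1: "integrable (PiM K (\<lambda>_. SN)) (\<lambda>x. \<Prod>i\<in>K. h i (x i))"
    using K h by (intro product_integrable_prod) auto
  then show "integrable PP (\<lambda>\<omega>. \<Prod>i\<in>K. h i (\<omega> i))"
    using integrable_distr_eq[OF R Fm] D eq by simp
  have "(\<integral>x. (\<Prod>i\<in>K. h i (x i)) \<partial>PiM K (\<lambda>_. SN)) = (\<Prod>i\<in>K. \<integral>t. h i t \<partial>SN)"
    using K h by (intro product_integral_prod) auto
  moreover have "(\<integral>x. (\<Prod>i\<in>K. h i (x i)) \<partial>PiM K (\<lambda>_. SN)) = (\<integral>\<omega>. (\<Prod>i\<in>K. h i (\<omega> i)) \<partial>PP)"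
    using integral_distr[OF R Fm] D eq by simp
  ultimately show "(\<integral>\<omega>. (\<Prod>i\<in>K. h i (\<omega> i)) \<partial>PP) = (\<Prod>i\<in>K. \<integral>t. h i t \<partial>SN)" by simp
qed

lemma SN_integral:
  assumes [measurable]: "F \<in> borel_measurable borel"
  shows "(\<integral>t. F t \<partial>SN) = (\<integral>t. std_normal_density t * F t \<partial>lborel)"
    and "integrable SN F \<longleftrightarrow> integrable lborel (\<lambda>t. std_normal_density t * F t)"
  by (subst integral_density; simp)+ (subst integrable_density; simp)


lemma std_pos: "std_normal_density t > 0"
  by (rule normal_density_pos) simp

lemma nd_quad:
  assumes s: "s > 0"
  shows "integrable lborel (\<lambda>t. normal_density m s t * (a + b * t + c * t\<^sup>2))"
    and "(\<integral>t. normal_density m s t * (a + b * t + c * t\<^sup>2) \<partial>lborel) = a + b * m + c * (m\<^sup>2 + s\<^sup>2)"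
proof -
  let ?n = "normal_density m s"
  have i0: "integrable lborel ?n" using s by simp
  have i1: "integrable lborel (\<lambda>t. ?n t * t)" using integrable_normal_moment_nz_1[OF s] .
  have i2': "integrable lborel (\<lambda>t. ?n t * (t - m)^2)" using integrable_normal_moment[OF s, of m 2] .
  have e2': "(\<integral>t. ?n t * (t - m)^2 \<partial>lborel) = s\<^sup>2"
    using integral_normal_moment_even[OF s, of m 1] s by (simp add: power2_eq_square)
  have e1: "(\<integral>t. ?n t * t \<partial>lborel) = m" using integral_normal_moment_nz_1[OF s] .
  have e0: "(\<integral>t. ?n t \<partial>lborel) = 1" using s by simp
  have eq: "?n t * (a + b * t + c * t\<^sup>2) = c * (?n t * (t - m)^2) + (b + 2 * c * m) * (?n t * t) + (a - c * m\<^sup>2) * ?n t" for t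
    by (simp add: algebra_simps power2_eq_square)
  have I: "integrable lborel (\<lambda>t. c * (?n t * (t - m)^2) + (b + 2 * c * m) * (?n t * t) + (a - c * m\<^sup>2) * ?n t)"
    using i0 i1 i2' by auto
  then show "integrable lborel (\<lambda>t. ?n t * (a + b * t + c * t\<^sup>2))" unfolding eq .
  have "(\<integral>t. ?n t * (a + b * t + c * t\<^sup>2) \<partial>lborel) =
      (\<integral>t. c * (?n t * (t - m)^2) + (b + 2 * c * m) * (?n t * t) + (a - c * m\<^sup>2) * ?n t \<partial>lborel)"
    unfolding eq ..
  also have "\<dots> = c * s\<^sup>2 + (b + 2 * c * m) * m + (a - c * m\<^sup>2) * 1"
  proof -
    have h0: "has_bochner_integral lborel ?n 1" using has_bochner_integral_integrable[OF i0] e0 by simp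
    have h1: "has_bochner_integral lborel (\<lambda>t. ?n t * t) m" using has_bochner_integral_integrable[OF i1] e1 by simp
    have h2: "has_bochner_integral lborel (\<lambda>t. ?n t * (t - m)^2) (s\<^sup>2)" using has_bochner_integral_integrable[OF i2'] e2' by simp
    have "has_bochner_integral lborel (\<lambda>t. c * (?n t * (t - m)^2) + (b + 2 * c * m) * (?n t * t) + (a - c * m\<^sup>2) * ?n t)
       (c * s\<^sup>2 + (b + 2 * c * m) * m + (a - c * m\<^sup>2) * 1)"
      by (intro has_bochner_integral_add has_bochner_integral_mult_right h0 h1 h2)
    then show ?thesis by (rule has_bochner_integral_integral_eq)
  qed
  also have "\<dots> = a + b * m + c * (m\<^sup>2 + s\<^sup>2)" by (simp add: algebra_simps power2_eq_square)
  finally show "(\<integral>t. ?n t * (a + b * t + c * t\<^sup>2) \<partial>lborel) = a + b * m + c * (m\<^sup>2 + s\<^sup>2)" .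
qed

definition gg :: "real \<Rightarrow> real \<Rightarrow> real \<Rightarrow> real" where
  "gg m s t = normal_density m s t / std_normal_density t"

lemma gg_measurable[measurable]: "gg m s \<in> borel_measurable borel"
  unfolding gg_def by measurable

lemma gg_pos: "s > 0 \<Longrightarrow> gg m s t > 0"
  unfolding gg_def using std_pos normal_density_pos by (simp add: divide_pos_pos)

lemma gg_01: "gg 0 1 t = 1"
  unfolding gg_def using std_pos[of t] by simp

lemma gg_SN:
  assumes s: "s > 0" and [measurable]: "F \<in> borel_measurable borel"
  shows "integrable SN (\<lambda>t. gg m s t * F t) \<longleftrightarrow> integrable lborel (\<lambda>t. normal_density m s t * F t)"
    and "(\<integral>t. gg m s t * F t \<partial>SN) = (\<integral>t. normal_density m s t * F t \<partial>lborel)"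
proof -
  have eq: "std_normal_density t * (gg m s t * F t) = normal_density m s t * F t" for t
    unfolding gg_def using std_pos[of t] by simp
  show "integrable SN (\<lambda>t. gg m s t * F t) \<longleftrightarrow> integrable lborel (\<lambda>t. normal_density m s t * F t)"
    by (subst SN_integral(2)) (simp_all add: eq)
  show "(\<integral>t. gg m s t * F t \<partial>SN) = (\<integral>t. normal_density m s t * F t \<partial>lborel)"
    by (subst SN_integral(1)) (simp_all add: eq)
qed

lemma gg_quad:
  assumes s: "s > 0"
  shows "integrable SN (\<lambda>t. gg m s t * (a + b * t + c * t\<^sup>2))"
    and "(\<integral>t. gg m s t * (a + b * t + c * t\<^sup>2) \<partial>SN) = a + b * m + c * (m\<^sup>2 + s\<^sup>2)"
  using gg_SN[OF s, of "\<lambda>t. a + b * t + c * t\<^sup>2" m] nd_quad[OF s, of m a b c] by simp_all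

lemma ln_gg:
  assumes s: "s > 0"
  shows "ln (gg m s t) = (- ln s - m\<^sup>2 / (2 * s\<^sup>2)) + (m / s\<^sup>2) * t + (1/2 - 1 / (2 * s\<^sup>2)) * t\<^sup>2"
proof -
  have 1: "sqrt (2 * pi * s\<^sup>2) = sqrt (2 * pi) * s" using s by (simp add: real_sqrt_mult)
  have "gg m s t = (1 / s) * (exp (- (t - m)\<^sup>2 / (2 * s\<^sup>2)) / exp (- t\<^sup>2 / 2))"
    unfolding gg_def normal_density_def 1 using s by (simp add: field_simps)
  also have "exp (- (t - m)\<^sup>2 / (2 * s\<^sup>2)) / exp (- t\<^sup>2 / 2) = exp (- (t - m)\<^sup>2 / (2 * s\<^sup>2) + t\<^sup>2 / 2)"
    by (simp add: exp_diff[symmetric])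
  finally have "gg m s t = (1 / s) * exp (- (t - m)\<^sup>2 / (2 * s\<^sup>2) + t\<^sup>2 / 2)" .
  then have "ln (gg m s t) = - ln s + (- (t - m)\<^sup>2 / (2 * s\<^sup>2) + t\<^sup>2 / 2)"
    using s by (simp add: ln_mult ln_div)
  moreover have "- ln s + (- (t - m)\<^sup>2 / (2 * s\<^sup>2) + t\<^sup>2 / 2) = (- ln s - m\<^sup>2 / (2 * s\<^sup>2)) + (m / s\<^sup>2) * t + (1/2 - 1 / (2 * s\<^sup>2)) * t\<^sup>2"
    using s by (simp add: field_simps power2_eq_square)
  ultimately show ?thesis by simp
qed

lemma EG:
  fixes mm ss :: "nat \<Rightarrow> real"
  assumes ss: "\<And>i. ss i > 0" and tail: "\<And>i. i \<ge> N \<Longrightarrow> mm i = 0 \<and> ss i = 1"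
  shows "integrable PP (\<lambda>\<omega>. (\<Prod>i<N. gg (mm i) (ss i) (\<omega> i)) * (a + b * \<omega> k + c * (\<omega> k)\<^sup>2))"
    and "(\<integral>\<omega>. (\<Prod>i<N. gg (mm i) (ss i) (\<omega> i)) * (a + b * \<omega> k + c * (\<omega> k)\<^sup>2) \<partial>PP)
          = a + b * mm k + c * ((mm k)\<^sup>2 + (ss k)\<^sup>2)"
proof -
  define K where "K = insert k {..<N}"
  define h where "h i = (if i = k then (\<lambda>t. gg (mm i) (ss i) t * (a + b * t + c * t\<^sup>2)) else gg (mm i) (ss i))" for i
  have K: "finite K" unfolding K_def by simp
  have G: "(\<Prod>i<N. gg (mm i) (ss i) (\<omega> i)) = (\<Prod>i\<in>K. gg (mm i) (ss i) (\<omega> i))" for \<omega>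
  proof (cases "k < N")
    case True then show ?thesis unfolding K_def by (simp add: insert_absorb)
  next
    case False then show ?thesis unfolding K_def using tail[of k] gg_01 by simp
  qed
  have P: "(\<Prod>i\<in>K. h i (\<omega> i)) = (\<Prod>i<N. gg (mm i) (ss i) (\<omega> i)) * (a + b * \<omega> k + c * (\<omega> k)\<^sup>2)" for \<omega>
  proof -
    have "(\<Prod>i\<in>K. h i (\<omega> i)) = h k (\<omega> k) * (\<Prod>i\<in>K - {k}. h i (\<omega> i))"
      by (rule prod.remove[OF K]) (simp add: K_def)
    also have "(\<Prod>i\<in>K - {k}. h i (\<omega> i)) = (\<Prod>i\<in>K - {k}. gg (mm i) (ss i) (\<omega> i))"
      by (rule prod.cong) (auto simp: h_def)
    also have "h k (\<omega> k) * \<dots> = (a + b * \<omega> k + c * (\<omega> k)\<^sup>2) * (gg (mm k) (ss k) (\<omega> k) * (\<Prod>i\<in>K - {k}. gg (mm i) (ss i) (\<omega> i)))"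
      by (simp add: h_def)
    also have "gg (mm k) (ss k) (\<omega> k) * (\<Prod>i\<in>K - {k}. gg (mm i) (ss i) (\<omega> i)) = (\<Prod>i\<in>K. gg (mm i) (ss i) (\<omega> i))"
      by (rule prod.remove[OF K, symmetric]) (simp add: K_def)
    finally show ?thesis using G by simp
  qed
  have hi: "integrable SN (h i)" if "i \<in> K" for i
  proof (cases "i = k")
    case True then show ?thesis using gg_quad(1)[OF ss] by (simp add: h_def)
  next
    case False then show ?thesis using gg_quad(1)[OF ss[of i], of "mm i" 1 0 0] by (simp add: h_def)
  qed
  show "integrable PP (\<lambda>\<omega>. (\<Prod>i<N. gg (mm i) (ss i) (\<omega> i)) * (a + b * \<omega> k + c * (\<omega> k)\<^sup>2))"
    using prodPP(1)[of K h, OF K hi] P by simp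
  have "(\<integral>\<omega>. (\<Prod>i<N. gg (mm i) (ss i) (\<omega> i)) * (a + b * \<omega> k + c * (\<omega> k)\<^sup>2) \<partial>PP) = (\<Prod>i\<in>K. \<integral>t. h i t \<partial>SN)"
    using prodPP(2)[of K h, OF K hi] P by simp
  also have "\<dots> = (\<integral>t. h k t \<partial>SN) * (\<Prod>i\<in>K - {k}. \<integral>t. h i t \<partial>SN)"
    by (rule prod.remove[OF K]) (simp add: K_def)
  also have "(\<Prod>i\<in>K - {k}. \<integral>t. h i t \<partial>SN) = 1"
  proof (rule prod.neutral, intro ballI)
    fix i assume "i \<in> K - {k}"
    then show "(\<integral>t. h i t \<partial>SN) = 1" using gg_quad(2)[OF ss[of i], of "mm i" 1 0 0] by (simp add: h_def)
  qed
  also have "(\<integral>t. h k t \<partial>SN) = a + b * mm k + c * ((mm k)\<^sup>2 + (ss k)\<^sup>2)"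
    using gg_quad(2)[OF ss[of k]] by (simp add: h_def)
  finally show "(\<integral>\<omega>. (\<Prod>i<N. gg (mm i) (ss i) (\<omega> i)) * (a + b * \<omega> k + c * (\<omega> k)\<^sup>2) \<partial>PP)
          = a + b * mm k + c * ((mm k)\<^sup>2 + (ss k)\<^sup>2)" by simp
qed


lemma sets_PP: "sets PP = sets (borel :: (nat \<Rightarrow> real) measure)"
proof -
  have "sets PP = sets (PiM UNIV (\<lambda>_::nat. (borel :: real measure)))"
    by (rule sets_PiM_cong) auto
  also have "\<dots> = sets borel" by (rule sets_PiM_equal_borel)
  finally show ?thesis .
qed

lemma measurable_PP: "measurable PP N = measurable borel N"
  by (rule measurable_cong_sets[OF sets_PP refl])

lemma not_summable_suminf:
  "\<not> summable g \<Longrightarrow> suminf g = (THE s. False)"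
proof -
  assume "\<not> summable g"
  then have "(\<lambda>s. g sums s) = (\<lambda>s. False)" by (auto simp: summable_def)
  then show ?thesis unfolding suminf_def by simp
qed

lemma pred_summable_sq[measurable]:
  "Measurable.pred PP (\<lambda>\<omega>. summable (\<lambda>k. (c k * \<omega> k)\<^sup>2))"
proof -
  have eq: "summable (\<lambda>k. (c k * \<omega> k)\<^sup>2) \<longleftrightarrow> (\<Sum>k. ennreal ((c k * \<omega> k)\<^sup>2)) \<noteq> top" for \<omega>
  proof
    assume "summable (\<lambda>k. (c k * \<omega> k)\<^sup>2)"
    then show "(\<Sum>k. ennreal ((c k * \<omega> k)\<^sup>2)) \<noteq> top" by (rule ennreal_suminf_neq_top) simp
  next
    assume "(\<Sum>k. ennreal ((c k * \<omega> k)\<^sup>2)) \<noteq> top"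
    then show "summable (\<lambda>k. (c k * \<omega> k)\<^sup>2)" by (intro summable_suminf_not_top) simp_all
  qed
  show ?thesis unfolding eq by measurable
qed

lemma measurable_phi:
  fixes f :: "nat \<Rightarrow> 'a::{real_inner,complete_space}"
  assumes on: "\<And>i j. inner (f i) (f j) = (if i = j then 1 else (0::real))"
  shows "(\<lambda>\<omega>. \<Sum>k. (c k * \<omega> k) *\<^sub>R f k) \<in> measurable PP borel"
proof -
  define S where "S n \<omega> = (\<Sum>k<n. (c k * \<omega> k) *\<^sub>R f k)" for n \<omega>
  define Q where "Q \<omega> \<longleftrightarrow> summable (\<lambda>k. (c k * \<omega> k)\<^sup>2)" for \<omega> :: "nat \<Rightarrow> real"
  define F where "F n \<omega> = (if Q \<omega> then S n \<omega> else (THE s::'a. False))" for n \<omega>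
  have Sm: "S n \<in> measurable PP borel" for n
  proof -
    have "continuous_on UNIV (S n)" unfolding S_def
      by (intro continuous_intros continuous_on_compose2[OF continuous_on_product_coordinates]) auto
    then show ?thesis unfolding measurable_PP by (rule borel_measurable_continuous_onI)
  qed
  have Fm: "F n \<in> measurable PP borel" for n
  proof -
    have pm: "{\<omega> \<in> space PP. summable (\<lambda>k. (c k * \<omega> k)\<^sup>2)} \<in> sets PP"
      using pred_summable_sq[of c] by (simp add: Measurable.pred_def)
    show ?thesis unfolding F_def Q_def
      by (intro measurable_If Sm measurable_const pm) simp
  qed
  have lim: "(\<lambda>n. F n \<omega>) \<longlonglongrightarrow> (\<Sum>k. (c k * \<omega> k) *\<^sub>R f k)" for \<omega>
  proof (cases "Q \<omega>")
    case True
    then have "summable (\<lambda>k. (c k * \<omega> k) *\<^sub>R f k)" unfolding Q_def by (rule on_summable[OF on])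
    then show ?thesis using True unfolding F_def S_def by (simp add: summable_LIMSEQ)
  next
    case False
    have "\<not> summable (\<lambda>k. (c k * \<omega> k) *\<^sub>R f k)"
    proof
      assume "summable (\<lambda>k. (c k * \<omega> k) *\<^sub>R f k)"
      then obtain v where "(\<lambda>k. (c k * \<omega> k) *\<^sub>R f k) sums v" by (auto simp: summable_def)
      from on_sums_norm[OF on this] False show False unfolding Q_def by (auto simp: sums_iff)
    qed
    then show ?thesis using False unfolding F_def by (simp add: not_summable_suminf)
  qed
  show ?thesis by (rule borel_measurable_LIMSEQ_metric[OF Fm lim])
qed


lemma AE_summable_sq:
  assumes sc: "summable (\<lambda>k. (c k)\<^sup>2)"
  shows "AE \<omega> in PP. summable (\<lambda>k. (c k * \<omega> k)\<^sup>2)"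
proof -
  have i: "integrable PP (\<lambda>\<omega>. (\<Prod>i<0. gg 0 1 (\<omega> i)) * (0 + 0 * \<omega> k + (c k)\<^sup>2 * (\<omega> k)\<^sup>2))"
    and e: "(\<integral>\<omega>. (\<Prod>i<0. gg 0 1 (\<omega> i)) * (0 + 0 * \<omega> k + (c k)\<^sup>2 * (\<omega> k)\<^sup>2) \<partial>PP) = 0 + 0 * 0 + (c k)\<^sup>2 * (0\<^sup>2 + 1\<^sup>2)" for k
    using EG[where mm="\<lambda>_. 0" and ss="\<lambda>_. 1" and N=0 and a=0 and b=0 and c="(c k)\<^sup>2" and k=k] by auto
  have i': "integrable PP (\<lambda>\<omega>. (c k * \<omega> k)\<^sup>2)" for k using i[of k] by (simp add: power_mult_distrib)
  have e': "(\<integral>\<omega>. (c k * \<omega> k)\<^sup>2 \<partial>PP) = (c k)\<^sup>2" for k using e[of k] by (simp add: power_mult_distrib)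
  have m[measurable]: "(\<lambda>\<omega>. (c k * \<omega> k)\<^sup>2) \<in> borel_measurable PP" for k by measurable
  have "(\<integral>\<^sup>+\<omega>. (\<Sum>k. ennreal ((c k * \<omega> k)\<^sup>2)) \<partial>PP) = (\<Sum>k. \<integral>\<^sup>+\<omega>. ennreal ((c k * \<omega> k)\<^sup>2) \<partial>PP)"
    by (rule nn_integral_suminf) measurable
  also have "\<dots> = (\<Sum>k. ennreal ((c k)\<^sup>2))"
    by (subst nn_integral_eq_integral[OF i']) (auto simp: e')
  also have "\<dots> = ennreal (\<Sum>k. (c k)\<^sup>2)" by (rule suminf_ennreal2[OF _ sc]) simp
  finally have "(\<integral>\<^sup>+\<omega>. (\<Sum>k. ennreal ((c k * \<omega> k)\<^sup>2)) \<partial>PP) \<noteq> \<infinity>" by simp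
  then have "AE \<omega> in PP. (\<Sum>k. ennreal ((c k * \<omega> k)\<^sup>2)) \<noteq> \<infinity>"
    by (intro nn_integral_PInf_AE) measurable
  then show ?thesis
    by eventually_elim (intro summable_suminf_not_top, simp_all)
qed


locale gs =
  fixes f :: "nat \<Rightarrow> 'a::{real_inner,complete_space}" and c mm ss xx :: "nat \<Rightarrow> real" and N :: nat
  assumes on: "\<And>i j. inner (f i) (f j) = (if i = j then 1 else 0)"
    and cpos: "\<And>k. c k > 0" and sc: "summable (\<lambda>k. (c k)\<^sup>2)"
    and ss: "\<And>i. ss i > 0" and ss1: "\<And>i. ss i \<le> 1"
    and tail: "\<And>i. i \<ge> N \<Longrightarrow> mm i = 0 \<and> ss i = 1"
    and xx: "\<And>k. xx k = c k * mm k"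

context gs
begin

lemma EGq:
  shows "integrable PP (\<lambda>\<omega>. (\<Prod>i<N. gg (mm i) (ss i) (\<omega> i)) * (a + b * \<omega> k + d * (\<omega> k)\<^sup>2))"
    and "(\<integral>\<omega>. (\<Prod>i<N. gg (mm i) (ss i) (\<omega> i)) * (a + b * \<omega> k + d * (\<omega> k)\<^sup>2) \<partial>PP)
          = a + b * mm k + d * ((mm k)\<^sup>2 + (ss k)\<^sup>2)"
  using EG[where mm=mm and ss=ss and N=N and a=a and b=b and c=d and k=k, OF ss tail] by auto

lemma G_meas[measurable]: "(\<lambda>\<omega>. \<Prod>i<N. gg (mm i) (ss i) (\<omega> i)) \<in> borel_measurable PP"
  by measurable

lemma G_pos: "(\<Prod>i<N. gg (mm i) (ss i) (\<omega> i)) > 0"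
  by (intro prod_pos) (auto intro: gg_pos ss)

lemma G_int: "integrable PP (\<lambda>\<omega>. \<Prod>i<N. gg (mm i) (ss i) (\<omega> i))"
  and G_one: "(\<integral>\<omega>. (\<Prod>i<N. gg (mm i) (ss i) (\<omega> i)) \<partial>PP) = 1"
  using EGq[of 1 0 0 0] by simp_all

lemma Gy_int: "integrable PP (\<lambda>\<omega>. (\<Prod>i<N. gg (mm i) (ss i) (\<omega> i)) * (c k * \<omega> k - xx k))"
  and Gy_zero: "(\<integral>\<omega>. (\<Prod>i<N. gg (mm i) (ss i) (\<omega> i)) * (c k * \<omega> k - xx k) \<partial>PP) = 0"
proof -
  have eq: "(c k * \<omega> k - xx k) = (- xx k + c k * \<omega> k + 0 * (\<omega> k)\<^sup>2)" for \<omega> :: "nat \<Rightarrow> real" by simp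
  show "integrable PP (\<lambda>\<omega>. (\<Prod>i<N. gg (mm i) (ss i) (\<omega> i)) * (c k * \<omega> k - xx k))"
    unfolding eq by (rule EGq)
  show "(\<integral>\<omega>. (\<Prod>i<N. gg (mm i) (ss i) (\<omega> i)) * (c k * \<omega> k - xx k) \<partial>PP) = 0"
    unfolding eq EGq(2) using xx[of k] by simp
qed

lemma Gy2_int: "integrable PP (\<lambda>\<omega>. (\<Prod>i<N. gg (mm i) (ss i) (\<omega> i)) * (c k * \<omega> k - xx k)\<^sup>2)"
  and Gy2_val: "(\<integral>\<omega>. (\<Prod>i<N. gg (mm i) (ss i) (\<omega> i)) * (c k * \<omega> k - xx k)\<^sup>2 \<partial>PP) = (c k)\<^sup>2 * (ss k)\<^sup>2"
proof -
  have eq: "(c k * \<omega> k - xx k)\<^sup>2 = ((xx k)\<^sup>2 + (- 2 * xx k * c k) * \<omega> k + (c k)\<^sup>2 * (\<omega> k)\<^sup>2)" for \<omega> :: "nat \<Rightarrow> real"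
    by (simp add: power2_eq_square algebra_simps)
  show "integrable PP (\<lambda>\<omega>. (\<Prod>i<N. gg (mm i) (ss i) (\<omega> i)) * (c k * \<omega> k - xx k)\<^sup>2)"
    unfolding eq by (rule EGq)
  show "(\<integral>\<omega>. (\<Prod>i<N. gg (mm i) (ss i) (\<omega> i)) * (c k * \<omega> k - xx k)\<^sup>2 \<partial>PP) = (c k)\<^sup>2 * (ss k)\<^sup>2"
    unfolding eq EGq(2) using xx[of k] by (simp add: power2_eq_square algebra_simps)
qed

lemma Glog_int: "integrable PP (\<lambda>\<omega>. (\<Prod>i<N. gg (mm i) (ss i) (\<omega> i)) * ln (\<Prod>i<N. gg (mm i) (ss i) (\<omega> i)))"
  and Glog_val: "(\<integral>\<omega>. (\<Prod>i<N. gg (mm i) (ss i) (\<omega> i)) * ln (\<Prod>i<N. gg (mm i) (ss i) (\<omega> i)) \<partial>PP)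
        = (\<Sum>j<N. - ln (ss j) + ((mm j)\<^sup>2 + (ss j)\<^sup>2 - 1) / 2)"
proof -
  let ?G = "\<lambda>\<omega>. \<Prod>i<N. gg (mm i) (ss i) (\<omega> i)"
  define A where "A j = - ln (ss j) - (mm j)\<^sup>2 / (2 * (ss j)\<^sup>2)" for j
  define B where "B j = mm j / (ss j)\<^sup>2" for j
  define D where "D j = 1/2 - 1 / (2 * (ss j)\<^sup>2)" for j
  have eq: "?G \<omega> * ln (?G \<omega>) = (\<Sum>j<N. ?G \<omega> * (A j + B j * \<omega> j + D j * (\<omega> j)\<^sup>2))" for \<omega>
  proof -
    have "ln (?G \<omega>) = (\<Sum>j<N. ln (gg (mm j) (ss j) (\<omega> j)))"
      by (rule ln_prod) (simp, metis gg_pos ss less_irrefl)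
    also have "\<dots> = (\<Sum>j<N. A j + B j * \<omega> j + D j * (\<omega> j)\<^sup>2)"
      by (rule sum.cong) (auto simp: ln_gg[OF ss] A_def B_def D_def)
    finally show ?thesis by (simp add: sum_distrib_left)
  qed
  show "integrable PP (\<lambda>\<omega>. ?G \<omega> * ln (?G \<omega>))"
    unfolding eq by (rule Bochner_Integration.integrable_sum[where f="\<lambda>j \<omega>. ?G \<omega> * (A j + B j * \<omega> j + D j * (\<omega> j)\<^sup>2)"]) (rule EGq)
  have "(\<integral>\<omega>. ?G \<omega> * ln (?G \<omega>) \<partial>PP) = (\<Sum>j<N. \<integral>\<omega>. ?G \<omega> * (A j + B j * \<omega> j + D j * (\<omega> j)\<^sup>2) \<partial>PP)"
    unfolding eq by (rule Bochner_Integration.integral_sum[where f="\<lambda>j \<omega>. ?G \<omega> * (A j + B j * \<omega> j + D j * (\<omega> j)\<^sup>2)"]) (rule EGq)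
  also have "\<dots> = (\<Sum>j<N. A j + B j * mm j + D j * ((mm j)\<^sup>2 + (ss j)\<^sup>2))"
    by (simp add: EGq(2))
  also have "\<dots> = (\<Sum>j<N. - ln (ss j) + ((mm j)\<^sup>2 + (ss j)\<^sup>2 - 1) / 2)"
  proof (rule sum.cong)
    fix j
    have "ss j > 0" by (rule ss)
    then show "A j + B j * mm j + D j * ((mm j)\<^sup>2 + (ss j)\<^sup>2) = - ln (ss j) + ((mm j)\<^sup>2 + (ss j)\<^sup>2 - 1) / 2"
      unfolding A_def B_def D_def by (simp add: field_simps power2_eq_square)
  qed simp
  finally show "(\<integral>\<omega>. ?G \<omega> * ln (?G \<omega>) \<partial>PP) = (\<Sum>j<N. - ln (ss j) + ((mm j)\<^sup>2 + (ss j)\<^sup>2 - 1) / 2)" .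
qed

end


context gs
begin

abbreviation "GG \<omega> \<equiv> \<Prod>i<N. gg (mm i) (ss i) (\<omega> i)"
abbreviation "Phi \<omega> \<equiv> \<Sum>k. (c k * \<omega> k) *\<^sub>R f k"
abbreviation "v0 \<equiv> \<Sum>k<N. xx k *\<^sub>R f k"

lemma Phi_meas: "(\<lambda>\<omega>. Phi \<omega>) \<in> measurable PP borel"
  by (rule measurable_phi[OF on])

lemma normPhi_meas[measurable]: "(\<lambda>\<omega>. norm (Phi \<omega> - v)) \<in> borel_measurable PP"
proof -
  have "(\<lambda>x. norm (x - v)) \<in> borel_measurable borel"
    by (rule borel_measurable_continuous_onI) (intro continuous_intros)
  from measurable_compose[OF Phi_meas this] show ?thesis .
qed

lemma innerPhi_meas[measurable]: "(\<lambda>\<omega>. inner u (Phi \<omega> - v)) \<in> borel_measurable PP"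
proof -
  have "(\<lambda>x. inner u (x - v)) \<in> borel_measurable borel"
    by (rule borel_measurable_continuous_onI) (intro continuous_intros)
  from measurable_compose[OF Phi_meas this] show ?thesis .
qed

lemma sums_rep:
  assumes "summable (\<lambda>k. (c k * \<omega> k)\<^sup>2)"
  shows "(\<lambda>k. (c k * \<omega> k - xx k) *\<^sub>R f k) sums (Phi \<omega> - v0)"
proof -
  have s1: "(\<lambda>k. (c k * \<omega> k) *\<^sub>R f k) sums Phi \<omega>"
    using on_summable[OF on assms] by (rule summable_sums)
  have s2: "(\<lambda>k. xx k *\<^sub>R f k) sums v0"
    by (rule sums_finite) (auto simp: xx tail)
  from sums_diff[OF s1 s2] show ?thesis by (simp add: scaleR_diff_left)
qed

lemma sq_int: "integrable PP (\<lambda>\<omega>. GG \<omega> * (norm (Phi \<omega> - v0))\<^sup>2)"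
  and sq_val: "(\<integral>\<omega>. GG \<omega> * (norm (Phi \<omega> - v0))\<^sup>2 \<partial>PP) = (\<Sum>k. (c k)\<^sup>2 * (ss k)\<^sup>2)"
proof -
  let ?h = "\<lambda>k \<omega>. GG \<omega> * (c k * \<omega> k - xx k)\<^sup>2"
  have AE1: "AE \<omega> in PP. (\<lambda>k. ?h k \<omega>) sums (GG \<omega> * (norm (Phi \<omega> - v0))\<^sup>2)"
    using AE_summable_sq[OF sc]
  proof eventually_elim
    case (elim \<omega>)
    from on_sums_norm[OF on sums_rep[OF elim]] show ?case by (rule sums_mult)
  qed
  have hnn: "?h k \<omega> \<ge> 0" for k \<omega> using G_pos[of \<omega>] by simp
  have sumc: "summable (\<lambda>k. (c k)\<^sup>2 * (ss k)\<^sup>2)"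
  proof (rule summable_comparison_test[OF _ sc], intro exI allI impI)
    fix k :: nat
    have "(ss k)\<^sup>2 \<le> 1" using ss[of k] ss1[of k] by (simp add: power_le_one)
    then show "norm ((c k)\<^sup>2 * (ss k)\<^sup>2) \<le> (c k)\<^sup>2" by (simp add: mult_left_le)
  qed
  have I: "integrable PP (\<lambda>\<omega>. \<Sum>k. ?h k \<omega>)"
    and V: "(\<integral>\<omega>. (\<Sum>k. ?h k \<omega>) \<partial>PP) = (\<Sum>k. \<integral>\<omega>. ?h k \<omega> \<partial>PP)"
  proof -
    have a: "integrable PP (?h k)" for k by (rule Gy2_int)
    have b: "AE \<omega> in PP. summable (\<lambda>k. norm (?h k \<omega>))"
      using AE1 by eventually_elim (use hnn in \<open>auto simp: sums_iff\<close>)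
    have c: "summable (\<lambda>k. \<integral>\<omega>. norm (?h k \<omega>) \<partial>PP)"
      using sumc hnn by (simp add: Gy2_val)
    show "integrable PP (\<lambda>\<omega>. \<Sum>k. ?h k \<omega>)" by (rule integrable_suminf[OF a b c])
    show "(\<integral>\<omega>. (\<Sum>k. ?h k \<omega>) \<partial>PP) = (\<Sum>k. \<integral>\<omega>. ?h k \<omega> \<partial>PP)" by (rule integral_suminf[OF a b c])
  qed
  have AE2: "AE \<omega> in PP. GG \<omega> * (norm (Phi \<omega> - v0))\<^sup>2 = (\<Sum>k. ?h k \<omega>)"
    using AE1 by eventually_elim (simp add: sums_iff)
  have m1: "(\<lambda>\<omega>. GG \<omega> * (norm (Phi \<omega> - v0))\<^sup>2) \<in> borel_measurable PP" by measurable
  have m2: "(\<lambda>\<omega>. \<Sum>k. ?h k \<omega>) \<in> borel_measurable PP" by measurable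
  show "integrable PP (\<lambda>\<omega>. GG \<omega> * (norm (Phi \<omega> - v0))\<^sup>2)"
    using integrable_cong_AE[OF m1 m2 AE2] I by simp
  have "(\<integral>\<omega>. GG \<omega> * (norm (Phi \<omega> - v0))\<^sup>2 \<partial>PP) = (\<integral>\<omega>. (\<Sum>k. ?h k \<omega>) \<partial>PP)"
    by (rule integral_cong_AE[OF m1 m2 AE2])
  also have "\<dots> = (\<Sum>k. (c k)\<^sup>2 * (ss k)\<^sup>2)" unfolding V by (simp add: Gy2_val)
  finally show "(\<integral>\<omega>. GG \<omega> * (norm (Phi \<omega> - v0))\<^sup>2 \<partial>PP) = (\<Sum>k. (c k)\<^sup>2 * (ss k)\<^sup>2)" .
qed

lemma Gabs_bound: "(\<integral>\<omega>. \<bar>GG \<omega> * (c k * \<omega> k - xx k)\<bar> \<partial>PP) \<le> c k"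
proof -
  have ck: "c k > 0" by (rule cpos)
  have pw: "\<bar>GG \<omega> * (c k * \<omega> k - xx k)\<bar> \<le> (c k * GG \<omega> + GG \<omega> * (c k * \<omega> k - xx k)\<^sup>2 / c k) / 2" for \<omega>
  proof -
    let ?y = "c k * \<omega> k - xx k"
    have "0 \<le> (\<bar>?y\<bar> - c k)\<^sup>2" by simp
    then have "2 * c k * \<bar>?y\<bar> \<le> (c k)\<^sup>2 + ?y\<^sup>2" by (simp add: power2_eq_square algebra_simps)
    then have "\<bar>?y\<bar> \<le> (c k + ?y\<^sup>2 / c k) / 2" using ck by (simp add: field_simps power2_eq_square)
    then have le: "GG \<omega> * \<bar>?y\<bar> \<le> GG \<omega> * ((c k + ?y\<^sup>2 / c k) / 2)"
      using G_pos[of \<omega>] by (intro mult_left_mono) auto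
    have e: "\<bar>GG \<omega> * ?y\<bar> = GG \<omega> * \<bar>?y\<bar>" using G_pos[of \<omega>] by (simp add: abs_mult)
    have e2: "GG \<omega> * ((c k + ?y\<^sup>2 / c k) / 2) = (c k * GG \<omega> + GG \<omega> * ?y\<^sup>2 / c k) / 2"
      by (simp add: field_simps)
    show ?thesis using le e e2 by linarith
  qed
  have "(\<integral>\<omega>. \<bar>GG \<omega> * (c k * \<omega> k - xx k)\<bar> \<partial>PP) \<le> (\<integral>\<omega>. (c k * GG \<omega> + GG \<omega> * (c k * \<omega> k - xx k)\<^sup>2 / c k) / 2 \<partial>PP)"
    by (rule integral_mono) (use Gy_int G_int Gy2_int pw in auto)
  also have "\<dots> = (c k * 1 + (c k)\<^sup>2 * (ss k)\<^sup>2 / c k) / 2"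
    using G_int Gy2_int by (simp add: G_one Gy2_val)
  also have "\<dots> \<le> c k"
  proof -
    have "(ss k)\<^sup>2 \<le> 1" using ss[of k] ss1[of k] by (simp add: power_le_one)
    then have "(c k)\<^sup>2 * (ss k)\<^sup>2 / c k \<le> c k" using ck by (simp add: power2_eq_square field_simps mult_left_le)
    then show ?thesis by simp
  qed
  finally show ?thesis .
qed

lemma lin_int: "integrable PP (\<lambda>\<omega>. GG \<omega> * inner u (Phi \<omega> - v0))"
  and lin_val: "(\<integral>\<omega>. GG \<omega> * inner u (Phi \<omega> - v0) \<partial>PP) = 0"
proof -
  let ?g = "\<lambda>k. inner u (f k)"
  let ?h = "\<lambda>k \<omega>. GG \<omega> * ((c k * \<omega> k - xx k) * ?g k)"
  have AE1: "AE \<omega> in PP. (\<lambda>k. ?h k \<omega>) sums (GG \<omega> * inner u (Phi \<omega> - v0))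
      \<and> summable (\<lambda>k. (c k * \<omega> k - xx k)\<^sup>2)"
    using AE_summable_sq[OF sc]
  proof eventually_elim
    case (elim \<omega>)
    have "(\<lambda>k. (c k * \<omega> k - xx k) * ?g k) sums inner u (Phi \<omega> - v0)"
      by (rule on_sums_inner[OF sums_rep[OF elim]])
    then have s1: "(\<lambda>k. ?h k \<omega>) sums (GG \<omega> * inner u (Phi \<omega> - v0))" by (rule sums_mult)
    have "(\<lambda>k. (c k * \<omega> k - xx k)\<^sup>2) sums (norm (Phi \<omega> - v0))\<^sup>2"
      by (rule on_sums_norm[OF on sums_rep[OF elim]])
    then show ?case using s1 by (auto simp: sums_iff)
  qed
  have sg: "summable (\<lambda>k. (?g k)\<^sup>2)" by (rule bessel_summable[OF on])
  have a: "integrable PP (?h k)" for k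
    using Gy_int[of k] integrable_mult_left[of "?g k" PP "\<lambda>\<omega>. GG \<omega> * (c k * \<omega> k - xx k)"]
    by (simp add: mult.assoc)
  have b: "AE \<omega> in PP. summable (\<lambda>k. norm (?h k \<omega>))"
    using AE1
  proof eventually_elim
    case (elim \<omega>)
    then have s: "summable (\<lambda>k. (c k * \<omega> k - xx k)\<^sup>2)" by simp
    show ?case
    proof (rule summable_comparison_test[OF _ summable_mult[OF summable_add[OF s sg], of "GG \<omega> / 2"]], intro exI allI impI)
      fix k :: nat
      let ?y = "c k * \<omega> k - xx k"
      have "0 \<le> (\<bar>?y\<bar> - \<bar>?g k\<bar>)\<^sup>2" by simp
      then have "\<bar>?y\<bar> * \<bar>?g k\<bar> \<le> (?y\<^sup>2 + (?g k)\<^sup>2) / 2" by (simp add: power2_eq_square algebra_simps)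
      then have "GG \<omega> * (\<bar>?y\<bar> * \<bar>?g k\<bar>) \<le> GG \<omega> * ((?y\<^sup>2 + (?g k)\<^sup>2) / 2)"
        using G_pos[of \<omega>] by (intro mult_left_mono) auto
      then show "norm (norm (?h k \<omega>)) \<le> GG \<omega> / 2 * (?y\<^sup>2 + (?g k)\<^sup>2)"
        using G_pos[of \<omega>] by (simp add: abs_mult)
    qed
  qed
  have c: "summable (\<lambda>k. \<integral>\<omega>. norm (?h k \<omega>) \<partial>PP)"
  proof (rule summable_comparison_test[OF _ summable_mult[OF summable_add[OF sg sc], of "1/2"]], intro exI allI impI)
    fix k :: nat
    have "(\<integral>\<omega>. norm (?h k \<omega>) \<partial>PP) = (\<integral>\<omega>. \<bar>?g k\<bar> * \<bar>GG \<omega> * (c k * \<omega> k - xx k)\<bar> \<partial>PP)"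
      by (rule Bochner_Integration.integral_cong) (auto simp: abs_mult)
    also have "\<dots> = \<bar>?g k\<bar> * (\<integral>\<omega>. \<bar>GG \<omega> * (c k * \<omega> k - xx k)\<bar> \<partial>PP)"
      by (rule integral_mult_right_zero)
    also have "\<dots> \<le> \<bar>?g k\<bar> * c k" by (rule mult_left_mono[OF Gabs_bound]) simp
    also have "\<dots> \<le> 1/2 * ((?g k)\<^sup>2 + (c k)\<^sup>2)"
    proof -
      have "0 \<le> (\<bar>?g k\<bar> - c k)\<^sup>2" by simp
      then show ?thesis by (simp add: power2_eq_square algebra_simps)
    qed
    finally show "norm (\<integral>\<omega>. norm (?h k \<omega>) \<partial>PP) \<le> 1/2 * ((?g k)\<^sup>2 + (c k)\<^sup>2)"
      by (simp add: integral_nonneg_AE)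
  qed
  have I: "integrable PP (\<lambda>\<omega>. \<Sum>k. ?h k \<omega>)" by (rule integrable_suminf[OF a b c])
  have V: "(\<integral>\<omega>. (\<Sum>k. ?h k \<omega>) \<partial>PP) = (\<Sum>k. \<integral>\<omega>. ?h k \<omega> \<partial>PP)" by (rule integral_suminf[OF a b c])
  have AE2: "AE \<omega> in PP. GG \<omega> * inner u (Phi \<omega> - v0) = (\<Sum>k. ?h k \<omega>)"
    using AE1 by eventually_elim (simp add: sums_iff)
  have m1: "(\<lambda>\<omega>. GG \<omega> * inner u (Phi \<omega> - v0)) \<in> borel_measurable PP" by measurable
  have m2: "(\<lambda>\<omega>. \<Sum>k. ?h k \<omega>) \<in> borel_measurable PP" by measurable
  show "integrable PP (\<lambda>\<omega>. GG \<omega> * inner u (Phi \<omega> - v0))"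
    using integrable_cong_AE[OF m1 m2 AE2] I by simp
  have "(\<integral>\<omega>. GG \<omega> * inner u (Phi \<omega> - v0) \<partial>PP) = (\<integral>\<omega>. (\<Sum>k. ?h k \<omega>) \<partial>PP)"
    by (rule integral_cong_AE[OF m1 m2 AE2])
  also have "\<dots> = 0"
  proof -
    have "(\<integral>\<omega>. ?h k \<omega> \<partial>PP) = 0" for k
    proof -
      have "(\<integral>\<omega>. ?h k \<omega> \<partial>PP) = (\<integral>\<omega>. GG \<omega> * (c k * \<omega> k - xx k) * ?g k \<partial>PP)"
        by (simp add: mult.assoc)
      also have "\<dots> = 0" using Gy_int[of k] by (simp add: Gy_zero)
      finally show ?thesis .
    qed
    then show ?thesis unfolding V by simp
  qed
  finally show "(\<integral>\<omega>. GG \<omega> * inner u (Phi \<omega> - v0) \<partial>PP) = 0" .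
qed

end


lemma gibbs_var:
  fixes V q G :: "'b \<Rightarrow> real" and \<beta> :: real
  assumes P: "prob_space M"
   and b: "\<beta> > 0"
   and iW: "integrable M (\<lambda>\<omega>. exp (- \<beta> * V \<omega>))"
   and iWV: "integrable M (\<lambda>\<omega>. exp (- \<beta> * V \<omega>) / (\<integral>y. exp (- \<beta> * V y) \<partial>M) * V \<omega>)"
   and Gpos: "\<And>\<omega>. G \<omega> > 0" and iG: "integrable M G" and G1: "(\<integral>\<omega>. G \<omega> \<partial>M) = 1"
   and Vq: "\<And>\<omega>. V \<omega> \<le> q \<omega>"
   and iGq: "integrable M (\<lambda>\<omega>. G \<omega> * q \<omega>)"
   and iGl: "integrable M (\<lambda>\<omega>. G \<omega> * ln (G \<omega>))"
  shows "(\<integral>\<omega>. exp (- \<beta> * V \<omega>) / (\<integral>y. exp (- \<beta> * V y) \<partial>M) * V \<omega> \<partial>M)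
     \<le> (\<integral>\<omega>. G \<omega> * q \<omega> \<partial>M) + (1 / \<beta>) * (\<integral>\<omega>. G \<omega> * ln (G \<omega>) \<partial>M)"
proof -
  interpret prob_space M by (rule P)
  define Z where "Z = (\<integral>y. exp (- \<beta> * V y) \<partial>M)"
  define a where "a = - \<beta> * (\<integral>\<omega>. G \<omega> * q \<omega> \<partial>M) - (\<integral>\<omega>. G \<omega> * ln (G \<omega>) \<partial>M)"
  define h where "h \<omega> = - \<beta> * q \<omega> - ln (G \<omega>)" for \<omega>
  have pw: "exp (a) * (1 - a) * G \<omega> + exp a * (- \<beta> * (G \<omega> * q \<omega>) - G \<omega> * ln (G \<omega>)) \<le> exp (- \<beta> * V \<omega>)" for \<omega>
  proof -
    have e1: "exp (- \<beta> * q \<omega>) \<le> exp (- \<beta> * V \<omega>)" using Vq[of \<omega>] b by simp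
    have e2: "exp (- \<beta> * q \<omega>) = G \<omega> * exp (h \<omega>)"
      using Gpos[of \<omega>] unfolding h_def by (simp add: exp_diff)
    have "exp a * (1 + (h \<omega> - a)) \<le> exp (h \<omega>)"
    proof -
      have "1 + (h \<omega> - a) \<le> exp (h \<omega> - a)" by (rule exp_ge_add_one_self)
      then have "exp a * (1 + (h \<omega> - a)) \<le> exp a * exp (h \<omega> - a)" by simp
      then show ?thesis by (simp add: exp_diff)
    qed
    then have e3: "G \<omega> * (exp a * (1 + (h \<omega> - a))) \<le> G \<omega> * exp (h \<omega>)"
      using Gpos[of \<omega>] by (intro mult_left_mono) auto
    have e4: "exp (a) * (1 - a) * G \<omega> + exp a * (- \<beta> * (G \<omega> * q \<omega>) - G \<omega> * ln (G \<omega>)) = G \<omega> * (exp a * (1 + (h \<omega> - a)))"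
      unfolding h_def by (simp add: algebra_simps)
    show ?thesis using e1 e2 e3 e4 by linarith
  qed
  have "(\<integral>\<omega>. exp (a) * (1 - a) * G \<omega> + exp a * (- \<beta> * (G \<omega> * q \<omega>) - G \<omega> * ln (G \<omega>)) \<partial>M) \<le> Z"
    unfolding Z_def by (rule integral_mono) (use iG iGq iGl iW pw in auto)
  moreover have "(\<integral>\<omega>. exp (a) * (1 - a) * G \<omega> + exp a * (- \<beta> * (G \<omega> * q \<omega>) - G \<omega> * ln (G \<omega>)) \<partial>M) = exp a"
  proof -
    have "(\<integral>\<omega>. exp (a) * (1 - a) * G \<omega> + exp a * (- \<beta> * (G \<omega> * q \<omega>) - G \<omega> * ln (G \<omega>)) \<partial>M)
        = exp (a) * (1 - a) * (\<integral>\<omega>. G \<omega> \<partial>M) + exp a * (- \<beta> * (\<integral>\<omega>. G \<omega> * q \<omega> \<partial>M) - (\<integral>\<omega>. G \<omega> * ln (G \<omega>) \<partial>M))"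
      using iG iGq iGl by (simp add: Bochner_Integration.integral_add Bochner_Integration.integral_diff)
    also have "\<dots> = exp a * (1 - a) + exp a * a" unfolding G1 a_def by simp
    also have "\<dots> = exp a" by (simp add: algebra_simps)
    finally show ?thesis .
  qed
  ultimately have Za: "exp a \<le> Z" by simp
  then have Zpos: "Z > 0" using exp_gt_zero[of a] by linarith
  have lnZ: "a \<le> ln Z" using Za Zpos by (metis ln_exp ln_le_cancel_iff exp_gt_zero)
  define p where "p \<omega> = exp (- \<beta> * V \<omega>) / Z" for \<omega>
  have pw2: "p \<omega> - 1 + p \<omega> * ln Z \<le> - \<beta> * (p \<omega> * V \<omega>)" for \<omega>
  proof -
    have pp: "p \<omega> > 0" using Zpos unfolding p_def by simp
    have "ln (1 / p \<omega>) \<le> 1 / p \<omega> - 1" using pp by (intro ln_le_minus_one) simp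
    then have "- ln (p \<omega>) \<le> 1 / p \<omega> - 1" using pp by (simp add: ln_div)
    then have "p \<omega> * (- ln (p \<omega>)) \<le> p \<omega> * (1 / p \<omega> - 1)" using pp by (intro mult_left_mono) auto
    then have "p \<omega> - 1 \<le> p \<omega> * ln (p \<omega>)" using pp by (simp add: algebra_simps)
    moreover have "ln (p \<omega>) = - \<beta> * V \<omega> - ln Z" unfolding p_def using Zpos by (simp add: ln_div)
    ultimately show ?thesis by (simp add: algebra_simps)
  qed
  have ip: "integrable M p" unfolding p_def using iW by simp
  have p1: "(\<integral>\<omega>. p \<omega> \<partial>M) = 1" unfolding p_def using Zpos by (simp add: Z_def)
  have iWV': "integrable M (\<lambda>\<omega>. p \<omega> * V \<omega>)" using iWV unfolding p_def Z_def .
  have "(\<integral>\<omega>. p \<omega> - 1 + p \<omega> * ln Z \<partial>M) \<le> (\<integral>\<omega>. - \<beta> * (p \<omega> * V \<omega>) \<partial>M)"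
    by (rule integral_mono) (use ip iWV' pw2 in auto)
  moreover have "(\<integral>\<omega>. p \<omega> - 1 + p \<omega> * ln Z \<partial>M) = ln Z"
    using ip by (simp add: p1 prob_space)
  moreover have "(\<integral>\<omega>. - \<beta> * (p \<omega> * V \<omega>) \<partial>M) = - \<beta> * (\<integral>\<omega>. p \<omega> * V \<omega> \<partial>M)" by simp
  ultimately have "ln Z \<le> - \<beta> * (\<integral>\<omega>. p \<omega> * V \<omega> \<partial>M)" by simp
  with lnZ have "\<beta> * (\<integral>\<omega>. p \<omega> * V \<omega> \<partial>M) \<le> - a" by simp
  then have "(\<integral>\<omega>. p \<omega> * V \<omega> \<partial>M) \<le> - a / \<beta>" using b by (simp add: field_simps)
  also have "- a / \<beta> = (\<integral>\<omega>. G \<omega> * q \<omega> \<partial>M) + (1 / \<beta>) * (\<integral>\<omega>. G \<omega> * ln (G \<omega>) \<partial>M)"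
    unfolding a_def using b by (simp add: field_simps)
  finally show ?thesis unfolding p_def Z_def .
qed


lemma sum_inv_sqrt: "(\<Sum>k<K. 1 / sqrt (real k + 1)) \<le> 2 * sqrt (real K)"
proof (induction K)
  case 0 then show ?case by simp
next
  case (Suc K)
  have a: "sqrt (real K) \<le> sqrt (real K + 1)" by simp
  have p: "sqrt (real K + 1) > 0" by simp
  have "1 / sqrt (real K + 1) \<le> 2 * sqrt (real K + 1) - 2 * sqrt (real K)"
  proof -
    have "sqrt (real K) * sqrt (real K + 1) = sqrt (real K * (real K + 1))" by (simp add: real_sqrt_mult)
    also have "\<dots> \<le> sqrt ((real K + 1/2)\<^sup>2)" by (intro real_sqrt_le_mono) (simp add: power2_eq_square algebra_simps)
    also have "\<dots> = real K + 1/2" by simp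
    finally have "sqrt (real K) * sqrt (real K + 1) \<le> real K + 1/2" .
    then have "1 \<le> 2 * (sqrt (real K + 1) * sqrt (real K + 1)) - 2 * sqrt (real K) * sqrt (real K + 1)"
      by simp
    then show ?thesis using p by (simp add: field_simps)
  qed
  then show ?case using Suc by (simp add: add.commute)
qed

lemma tail_inv_sq:
  assumes "1 \<le> K" "K \<le> n"
  shows "(\<Sum>k\<in>{K..<n}. 1 / (real k + 1)\<^sup>2) \<le> 1 / real K"
proof -
  have "(\<Sum>k\<in>{K..<n}. 1 / (real k + 1)\<^sup>2) \<le> (\<Sum>k\<in>{K..<n}. 1 / real k - 1 / (real k + 1))"
  proof (rule sum_mono)
    fix k assume "k \<in> {K..<n}"
    then have k: "real k \<ge> 1" using assms by auto
    have "1 / (real k + 1)\<^sup>2 \<le> 1 / (real k * (real k + 1))"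
      using k by (intro divide_left_mono) (auto simp: power2_eq_square)
    also have "\<dots> = 1 / real k - 1 / (real k + 1)" using k by (simp add: field_simps)
    finally show "1 / (real k + 1)\<^sup>2 \<le> 1 / real k - 1 / (real k + 1)" .
  qed
  also have "(\<Sum>k\<in>{K..<n}. 1 / real k - 1 / (real k + 1)) = 1 / real K - 1 / real n"
    using assms(2)
  proof (induction n rule: dec_induct)
    case base then show ?case by simp
  next
    case (step n) then show ?case by (simp add: add.commute)
  qed
  also have "\<dots> \<le> 1 / real K" by simp
  finally show ?thesis .
qed

lemma ln_sq_bound:
  assumes y: "y \<ge> 0"
  shows "ln (1 + y\<^sup>2) \<le> 4 * sqrt y"
proof -
  have le: "1 + y\<^sup>2 \<le> (1 + y)\<^sup>2" using y by (simp add: power2_eq_square algebra_simps)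
  have p1: "0 < 1 + y\<^sup>2" by (simp add: add_pos_nonneg)
  have p2: "0 < (1 + y)\<^sup>2" using y by simp
  have "ln (1 + y\<^sup>2) \<le> ln ((1 + y)\<^sup>2)" using ln_le_cancel_iff[OF p1 p2] le by simp
  also have "ln ((1 + y)\<^sup>2) = 2 * ln (1 + y)" using y by (simp add: ln_realpow)
  also have "ln (1 + y) = 2 * ln (sqrt (1 + y))" using y by (simp add: ln_sqrt)
  also have "ln (sqrt (1 + y)) \<le> sqrt (1 + y) - 1" using y by (intro ln_le_minus_one) simp
  also have "sqrt (1 + y) \<le> 1 + sqrt y"
  proof (rule real_le_lsqrt)
    show "0 \<le> 1 + sqrt y" using y by simp
    have "(1 + sqrt y)\<^sup>2 = 1 + 2 * sqrt y + (sqrt y)\<^sup>2" by (simp add: power2_eq_square algebra_simps)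
    also have "(sqrt y)\<^sup>2 = y" using y by simp
    finally show "1 + y \<le> (1 + sqrt y)\<^sup>2" using y by simp
  qed
  finally show ?thesis by simp
qed

lemma sum_ln_bound:
  fixes a :: "nat \<Rightarrow> real"
  assumes b: "b \<ge> 0" and a0: "\<And>k. 0 \<le> a k" and ab: "\<And>k. a k \<le> b / (real k + 1)\<^sup>2"
  shows "summable (\<lambda>k. ln (1 + a k))" and "(\<Sum>k. ln (1 + a k)) \<le> 9 * (sqrt b + 1)"
proof -
  have nn: "0 \<le> ln (1 + a k)" for k using a0[of k] by simp
  have part: "(\<Sum>k<n. ln (1 + a k)) \<le> 9 * (sqrt b + 1)" for n
  proof (cases "b = 0")
    case True
    then have "a k = 0" for k using a0[of k] ab[of k] by simp
    then show ?thesis using b by simp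
  next
    case False
    define r where "r = sqrt b"
    have r: "r > 0" using b False unfolding r_def by simp
    define K where "K = nat \<lceil>r\<rceil>"
    have K1: "1 \<le> K" using r unfolding K_def by linarith
    have Kr: "r \<le> real K" "real K \<le> r + 1" using r unfolding K_def by linarith+
    define m where "m = max n K"
    have "(\<Sum>k<n. ln (1 + a k)) \<le> (\<Sum>k<m. ln (1 + a k))"
      by (rule sum_mono2) (auto simp: m_def nn)
    also have "\<dots> = (\<Sum>k<K. ln (1 + a k)) + (\<Sum>k\<in>{K..<m}. ln (1 + a k))"
      using sum.atLeastLessThan_concat[of 0 K m "\<lambda>k. ln (1 + a k)"] by (simp add: m_def lessThan_atLeast0)
    also have "(\<Sum>k<K. ln (1 + a k)) \<le> (\<Sum>k<K. 4 * sqrt r * (1 / sqrt (real k + 1)))"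
    proof (rule sum_mono)
      fix k
      have "ln (1 + a k) \<le> ln (1 + (r / (real k + 1))\<^sup>2)"
        using ab[of k] a0[of k] b unfolding r_def by (simp add: power_divide)
      also have "\<dots> \<le> 4 * sqrt (r / (real k + 1))" using r by (intro ln_sq_bound) simp
      also have "\<dots> = 4 * sqrt r * (1 / sqrt (real k + 1))" by (simp add: real_sqrt_divide)
      finally show "ln (1 + a k) \<le> 4 * sqrt r * (1 / sqrt (real k + 1))" .
    qed
    also have "(\<Sum>k<K. 4 * sqrt r * (1 / sqrt (real k + 1))) \<le> 4 * sqrt r * (2 * sqrt (real K))"
      by (simp only: sum_distrib_left[symmetric]) (intro mult_left_mono sum_inv_sqrt; use r in simp)
    also have "(\<Sum>k\<in>{K..<m}. ln (1 + a k)) \<le> (\<Sum>k\<in>{K..<m}. b * (1 / (real k + 1)\<^sup>2))"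
    proof (rule sum_mono)
      fix k
      have "ln (1 + a k) \<le> a k" using a0[of k] by (intro ln_add_one_self_le_self) 
      then show "ln (1 + a k) \<le> b * (1 / (real k + 1)\<^sup>2)" using ab[of k] by simp
    qed
    also have "\<dots> \<le> b * (1 / real K)"
      by (simp only: sum_distrib_left[symmetric]) (intro mult_left_mono tail_inv_sq K1, auto simp: m_def b)
    also have "b * (1 / real K) \<le> r"
    proof -
      have "b = r * r" using b unfolding r_def by simp
      have "r * r \<le> r * real K" using Kr(1) r by (intro mult_left_mono) auto
      moreover have "real K > 0" using K1 by simp
      ultimately show ?thesis using \<open>b = r * r\<close> by (simp add: field_simps)
    qed
    also have "4 * sqrt r * (2 * sqrt (real K)) \<le> 8 * (r + 1)"
    proof -
      have "sqrt r * sqrt (real K) = sqrt (r * real K)" by (simp add: real_sqrt_mult)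
      also have "\<dots> \<le> sqrt ((r + 1) * (r + 1))"
      proof -
        have "r * real K \<le> (r + 1) * (r + 1)" using Kr r by (intro mult_mono) auto
        then show ?thesis by (simp only: real_sqrt_le_iff)
      qed
      also have "\<dots> = r + 1" using r by simp
      finally show ?thesis by simp
    qed
    finally show ?thesis unfolding r_def by simp
  qed
  show s: "summable (\<lambda>k. ln (1 + a k))" by (rule summableI_nonneg_bounded[OF nn part])
  show "(\<Sum>k. ln (1 + a k)) \<le> 9 * (sqrt b + 1)" by (rule suminf_le_const[OF s part])
qed


lemma summable_inv_sq: "summable (\<lambda>k. 1 / (real k + 1)\<^sup>2)"
proof -
  have "summable (\<lambda>n. inverse (real n ^ 2))" by (rule inverse_power_summable) simp
  then have "summable (\<lambda>n. inverse (real (Suc n) ^ 2))" by (subst summable_Suc_iff)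
  then show ?thesis by (simp add: field_simps)
qed

lemma main_bound:
  fixes f :: "nat \<Rightarrow> 'a::{real_inner,complete_space}" and \<mu> :: "nat \<Rightarrow> real"
  assumes onb: "orthonormal_basis f"
    and mu_pos: "\<And>k. \<mu> k > 0" and smu: "summable \<mu>"
    and lam: "lam > 0" and b: "\<beta> > 0"
    and der: "\<forall>x. (L has_derivative (\<lambda>h. inner (gradL x) h)) (at x)"
    and lip: "M-lipschitz_on UNIV gradL"
    and inHK: "in_HK \<mu> f xt"
    and iW0: "integrable (gauss_ref \<mu> f lam \<beta>) (\<lambda>x. exp (- \<beta> * L x))"
    and iL: "integrable (gibbs \<mu> f lam \<beta> L) L"
    and sS: "summable (\<lambda>k. ln (1 + M * \<mu> k / lam))"
  shows "(\<integral>x. L x \<partial>gibbs \<mu> f lam \<beta> L)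
     \<le> L xt + (\<Sum>k. ln (1 + M * \<mu> k / lam)) / (2 * \<beta>) + lam / 2 * (HK_norm \<mu> f xt)\<^sup>2"
proof -
  have on: "\<And>i j. inner (f i) (f j) = (if i = j then 1 else (0::real))"
    using onb by (simp add: orthonormal_basis_def)
  have M0: "M \<ge> 0" using lip by (rule lipschitz_on_nonneg)
  define c where "c k = sqrt (\<mu> k / (\<beta> * lam))" for k
  have cpos: "c k > 0" for k unfolding c_def using mu_pos[of k] lam b by simp
  have c2: "(c k)\<^sup>2 = \<mu> k / (\<beta> * lam)" for k unfolding c_def using mu_pos[of k] lam b by simp
  have sc: "summable (\<lambda>k. (c k)\<^sup>2)" unfolding c2 using smu by (simp add: summable_divide)
  define Phi where "Phi \<omega> = (\<Sum>k. (c k * \<omega> k) *\<^sub>R f k)" for \<omega>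
  have Phim: "Phi \<in> measurable PP borel" unfolding Phi_def by (rule measurable_phi[OF on])
  have Lc: "continuous_on UNIV L"
    using der by (auto intro!: continuous_at_imp_continuous_on has_derivative_continuous)
  have Lm[measurable]: "L \<in> borel_measurable borel" by (rule borel_measurable_continuous_onI[OF Lc])
  have gr: "gauss_ref \<mu> f lam \<beta> = distr PP borel Phi"
    unfolding gauss_ref_def Phi_def c_def ..
  define V where "V \<omega> = L (Phi \<omega>)" for \<omega>
  have Vm[measurable]: "V \<in> borel_measurable PP" unfolding V_def using measurable_compose[OF Phim Lm] .
  define Z where "Z = (\<integral>\<omega>. exp (- \<beta> * V \<omega>) \<partial>PP)"
  have Zeq: "(\<integral>y. exp (- \<beta> * L y) \<partial>gauss_ref \<mu> f lam \<beta>) = Z"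
    unfolding gr Z_def V_def by (rule integral_distr[OF Phim]) measurable
  have iW: "integrable PP (\<lambda>\<omega>. exp (- \<beta> * V \<omega>))"
    using iW0 unfolding gr V_def by (subst (asm) integrable_distr_eq[OF Phim]) measurable
  have dm: "(\<lambda>x. exp (- \<beta> * L x) / Z) \<in> borel_measurable borel" by measurable
  have dnn: "AE x in gauss_ref \<mu> f lam \<beta>. 0 \<le> exp (- \<beta> * L x) / Z"
  proof -
    have "Z \<ge> 0" unfolding Z_def by (rule integral_nonneg_AE) simp
    then show ?thesis by simp
  qed
  have gib: "gibbs \<mu> f lam \<beta> L = density (gauss_ref \<mu> f lam \<beta>) (\<lambda>x. exp (- \<beta> * L x) / Z)"
    unfolding gibbs_def Zeq ..
  have LHS: "(\<integral>x. L x \<partial>gibbs \<mu> f lam \<beta> L) = (\<integral>\<omega>. exp (- \<beta> * V \<omega>) / Z * V \<omega> \<partial>PP)"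
  proof -
    have "(\<integral>x. L x \<partial>gibbs \<mu> f lam \<beta> L) = (\<integral>x. exp (- \<beta> * L x) / Z * L x \<partial>gauss_ref \<mu> f lam \<beta>)"
      unfolding gib using dnn by (subst integral_density) (auto simp: gr)
    also have "\<dots> = (\<integral>\<omega>. exp (- \<beta> * V \<omega>) / Z * V \<omega> \<partial>PP)"
      unfolding gr V_def by (rule integral_distr[OF Phim]) measurable
    finally show ?thesis .
  qed
  have iWV: "integrable PP (\<lambda>\<omega>. exp (- \<beta> * V \<omega>) / Z * V \<omega>)"
  proof -
    have "integrable (gauss_ref \<mu> f lam \<beta>) (\<lambda>x. exp (- \<beta> * L x) / Z * L x)"
      using iL unfolding gib using dnn by (subst (asm) integrable_density) (auto simp: gr)
    then show ?thesis unfolding gr V_def by (subst (asm) integrable_distr_eq[OF Phim]) measurable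
  qed
  define a where "a k = M * \<mu> k / lam" for k
  have a0: "a k \<ge> 0" for k unfolding a_def using M0 mu_pos[of k] lam by simp
  define s where "s k = 1 / sqrt (1 + a k)" for k
  have spos: "s k > 0" for k unfolding s_def using a0[of k] by simp
  have s1: "s k \<le> 1" for k unfolding s_def using a0[of k] by (simp add: field_simps)
  define xk where "xk k = inner xt (f k)" for k
  define S where "S = (\<Sum>k. ln (1 + a k))"
  define H2 where "H2 = (HK_norm \<mu> f xt)\<^sup>2"
  have sH: "summable (\<lambda>k. (xk k)\<^sup>2 / \<mu> k)" using inHK unfolding in_HK_def xk_def .
  have H2eq: "H2 = (\<Sum>k. (xk k)\<^sup>2 / \<mu> k)"
  proof -
    have "0 \<le> (\<Sum>k. (xk k)\<^sup>2 / \<mu> k)" using sH by (intro suminf_nonneg) (use mu_pos in \<open>auto intro!: divide_nonneg_pos\<close>)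
    then show ?thesis unfolding H2_def HK_norm_def xk_def by simp
  qed
  define T where "T N = (\<Sum>n. (c (n + N))\<^sup>2)" for N
  define v where "v N = (\<Sum>k<N. xk k *\<^sub>R f k)" for N
  define X where "X = (\<integral>\<omega>. exp (- \<beta> * V \<omega>) / Z * V \<omega> \<partial>PP)"
  have bound: "X \<le> L (v N) + M / 2 * T N + S / (2 * \<beta>) + lam / 2 * H2" for N
  proof -
    define mm where "mm k = (if k < N then xk k / c k else 0)" for k
    define ss where "ss k = (if k < N then s k else 1)" for k
    define xx where "xx k = (if k < N then xk k else 0)" for k
    interpret G: gs f c mm ss xx N
    proof
      show "\<And>i j. inner (f i) (f j) = (if i = j then 1 else 0)" by (rule on)
      show "\<And>k. c k > 0" by (rule cpos)
      show "summable (\<lambda>k. (c k)\<^sup>2)" by (rule sc)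
      show "\<And>i. ss i > 0" unfolding ss_def using spos by simp
      show "\<And>i. ss i \<le> 1" unfolding ss_def using s1 by simp
      show "\<And>i. N \<le> i \<Longrightarrow> mm i = 0 \<and> ss i = 1" unfolding mm_def ss_def by simp
      show "\<And>k. xx k = c k * mm k" unfolding xx_def mm_def using cpos by (simp add: less_imp_neq[symmetric])
    qed
    have v0: "(\<Sum>k<N. xx k *\<^sub>R f k) = v N" unfolding v_def xx_def by simp
    define GG where "GG \<omega> = (\<Prod>i<N. gg (mm i) (ss i) (\<omega> i))" for \<omega>
    define u where "u = gradL (v N)"
    define q where "q \<omega> = L (v N) + inner u (Phi \<omega> - v N) + M / 2 * (norm (Phi \<omega> - v N))\<^sup>2" for \<omega>
    have Vq: "V \<omega> \<le> q \<omega>" for \<omega>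
      unfolding V_def q_def u_def using taylor_upper[of L gradL M "Phi \<omega>" "v N"] der lip by blast
    have qeq: "GG \<omega> * q \<omega> = L (v N) * GG \<omega> + GG \<omega> * inner u (Phi \<omega> - v N) + M / 2 * (GG \<omega> * (norm (Phi \<omega> - v N))\<^sup>2)" for \<omega>
      unfolding q_def by (simp add: algebra_simps)
    have iG: "integrable PP GG" unfolding GG_def by (rule G.G_int)
    have G1: "(\<integral>\<omega>. GG \<omega> \<partial>PP) = 1" unfolding GG_def by (rule G.G_one)
    have il: "integrable PP (\<lambda>\<omega>. GG \<omega> * inner u (Phi \<omega> - v N))"
      using G.lin_int[of u] unfolding GG_def Phi_def v0 .
    have l0: "(\<integral>\<omega>. GG \<omega> * inner u (Phi \<omega> - v N) \<partial>PP) = 0"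
      using G.lin_val[of u] unfolding GG_def Phi_def v0 .
    have isq: "integrable PP (\<lambda>\<omega>. GG \<omega> * (norm (Phi \<omega> - v N))\<^sup>2)"
      using G.sq_int unfolding GG_def Phi_def v0 .
    have vsq: "(\<integral>\<omega>. GG \<omega> * (norm (Phi \<omega> - v N))\<^sup>2 \<partial>PP) = (\<Sum>k. (c k)\<^sup>2 * (ss k)\<^sup>2)"
      using G.sq_val unfolding GG_def Phi_def v0 .
    have iGq: "integrable PP (\<lambda>\<omega>. GG \<omega> * q \<omega>)"
      unfolding qeq using iG il isq by auto
    have vGq: "(\<integral>\<omega>. GG \<omega> * q \<omega> \<partial>PP) = L (v N) + M / 2 * (\<Sum>k. (c k)\<^sup>2 * (ss k)\<^sup>2)"
      unfolding qeq using iG il isq by (simp add: G1 l0 vsq)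
    have iGl: "integrable PP (\<lambda>\<omega>. GG \<omega> * ln (GG \<omega>))" unfolding GG_def by (rule G.Glog_int)
    have vGl: "(\<integral>\<omega>. GG \<omega> * ln (GG \<omega>) \<partial>PP) = (\<Sum>j<N. - ln (ss j) + ((mm j)\<^sup>2 + (ss j)\<^sup>2 - 1) / 2)"
      unfolding GG_def by (rule G.Glog_val)
    have Gp: "GG \<omega> > 0" for \<omega> unfolding GG_def by (rule G.G_pos)
    have var: "X \<le> (\<integral>\<omega>. GG \<omega> * q \<omega> \<partial>PP) + (1 / \<beta>) * (\<integral>\<omega>. GG \<omega> * ln (GG \<omega>) \<partial>PP)"
      unfolding X_def Z_def
      by (rule gibbs_var[OF prob_PP b iW iWV[unfolded Z_def] Gp iG G1 Vq iGq iGl])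
    have split: "(\<Sum>k. (c k)\<^sup>2 * (ss k)\<^sup>2) = T N + (\<Sum>k<N. (c k)\<^sup>2 * (s k)\<^sup>2)"
    proof -
      have sm: "summable (\<lambda>k. (c k)\<^sup>2 * (ss k)\<^sup>2)"
      proof (rule summable_comparison_test[OF _ sc], intro exI allI impI)
        fix k :: nat
        have "(ss k)\<^sup>2 \<le> 1" using G.ss[of k] G.ss1[of k] by (simp add: power_le_one)
        then show "norm ((c k)\<^sup>2 * (ss k)\<^sup>2) \<le> (c k)\<^sup>2" by (simp add: mult_left_le)
      qed
      have "(\<Sum>k. (c k)\<^sup>2 * (ss k)\<^sup>2) = (\<Sum>n. (c (n + N))\<^sup>2 * (ss (n + N))\<^sup>2) + (\<Sum>k<N. (c k)\<^sup>2 * (ss k)\<^sup>2)"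
        by (rule suminf_split_initial_segment[OF sm])
      moreover have "(\<lambda>n. (c (n + N))\<^sup>2 * (ss (n + N))\<^sup>2) = (\<lambda>n. (c (n + N))\<^sup>2)" by (auto simp: ss_def)
      moreover have "(\<Sum>k<N. (c k)\<^sup>2 * (ss k)\<^sup>2) = (\<Sum>k<N. (c k)\<^sup>2 * (s k)\<^sup>2)" by (rule sum.cong) (auto simp: ss_def)
      ultimately show ?thesis unfolding T_def by simp
    qed
    have tm: "M / 2 * ((c j)\<^sup>2 * (s j)\<^sup>2) + (1 / \<beta>) * (- ln (s j) + ((xk j / c j)\<^sup>2 + (s j)\<^sup>2 - 1) / 2)
        = ln (1 + a j) / (2 * \<beta>) + lam / 2 * ((xk j)\<^sup>2 / \<mu> j)" for j
    proof -
      have ap: "1 + a j > 0" using a0[of j] by simp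
      have ss2: "(s j)\<^sup>2 = 1 / (1 + a j)" unfolding s_def using ap by (simp add: power_divide)
      have lns: "ln (s j) = - ln (1 + a j) / 2" unfolding s_def using ap by (simp add: ln_div ln_sqrt)
      have Mc: "M * (c j)\<^sup>2 = a j / \<beta>" unfolding c2 a_def using lam b by (simp add: field_simps)
      have xc: "(xk j / c j)\<^sup>2 = (xk j)\<^sup>2 * (\<beta> * lam) / \<mu> j"
        unfolding power_divide c2 using mu_pos[of j] lam b by (simp add: field_simps)
      have "M / 2 * ((c j)\<^sup>2 * (s j)\<^sup>2) = (M * (c j)\<^sup>2) / 2 * (s j)\<^sup>2" by simp
      also have "\<dots> = a j / (2 * \<beta>) * (s j)\<^sup>2" unfolding Mc by simp
      finally have "M / 2 * ((c j)\<^sup>2 * (s j)\<^sup>2) = a j / (2 * \<beta>) * (s j)\<^sup>2" .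
      then have "M / 2 * ((c j)\<^sup>2 * (s j)\<^sup>2) + (1 / \<beta>) * (- ln (s j) + ((xk j / c j)\<^sup>2 + (s j)\<^sup>2 - 1) / 2)
         = (a j * (s j)\<^sup>2 + (s j)\<^sup>2 - 1) / (2 * \<beta>) + ln (1 + a j) / (2 * \<beta>) + lam / 2 * ((xk j)\<^sup>2 / \<mu> j)"
        unfolding lns xc using b lam mu_pos[of j] by (simp add: field_simps)
      moreover have "a j * (s j)\<^sup>2 + (s j)\<^sup>2 - 1 = 0" unfolding ss2 using ap by (simp add: field_simps)
      ultimately show ?thesis by simp
    qed
    have "X \<le> L (v N) + M / 2 * (T N + (\<Sum>k<N. (c k)\<^sup>2 * (s k)\<^sup>2))
       + (1 / \<beta>) * (\<Sum>j<N. - ln (s j) + ((xk j / c j)\<^sup>2 + (s j)\<^sup>2 - 1) / 2)"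
    proof -
      have "(\<Sum>j<N. - ln (ss j) + ((mm j)\<^sup>2 + (ss j)\<^sup>2 - 1) / 2) = (\<Sum>j<N. - ln (s j) + ((xk j / c j)\<^sup>2 + (s j)\<^sup>2 - 1) / 2)"
        by (rule sum.cong) (auto simp: ss_def mm_def)
      then show ?thesis using var vGq vGl split by simp
    qed
    also have "\<dots> = L (v N) + M / 2 * T N + (\<Sum>j<N. M / 2 * ((c j)\<^sup>2 * (s j)\<^sup>2) + (1 / \<beta>) * (- ln (s j) + ((xk j / c j)\<^sup>2 + (s j)\<^sup>2 - 1) / 2))"
    proof -
      have e1: "M / 2 * (T N + (\<Sum>k<N. (c k)\<^sup>2 * (s k)\<^sup>2)) = M / 2 * T N + (\<Sum>j<N. M / 2 * ((c j)\<^sup>2 * (s j)\<^sup>2))"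
        by (simp add: distrib_left sum_distrib_left)
      have e2: "(1 / \<beta>) * (\<Sum>j<N. - ln (s j) + ((xk j / c j)\<^sup>2 + (s j)\<^sup>2 - 1) / 2)
          = (\<Sum>j<N. (1 / \<beta>) * (- ln (s j) + ((xk j / c j)\<^sup>2 + (s j)\<^sup>2 - 1) / 2))"
        by (rule sum_distrib_left)
      show ?thesis by (simp only: e1 e2 sum.distrib[symmetric] add.assoc)
    qed
    also have "\<dots> = L (v N) + M / 2 * T N + ((\<Sum>j<N. ln (1 + a j)) / (2 * \<beta>) + lam / 2 * (\<Sum>j<N. (xk j)\<^sup>2 / \<mu> j))"
      unfolding tm by (simp add: sum.distrib sum_distrib_left sum_divide_distrib)
    also have "\<dots> \<le> L (v N) + M / 2 * T N + (S / (2 * \<beta>) + lam / 2 * H2)"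
    proof -
      have "(\<Sum>j<N. ln (1 + a j)) \<le> S"
        unfolding S_def using sS a0 by (intro sum_le_suminf) (auto simp: a_def)
      moreover have "(\<Sum>j<N. (xk j)\<^sup>2 / \<mu> j) \<le> H2"
        unfolding H2eq using sH by (intro sum_le_suminf) (use mu_pos in \<open>auto intro!: divide_nonneg_pos\<close>)
      ultimately show ?thesis using b lam by (intro add_left_mono add_mono divide_right_mono mult_left_mono) auto
    qed
    finally show ?thesis by simp
  qed
  have limv: "(\<lambda>N. L (v N)) \<longlonglongrightarrow> L xt"
  proof -
    have "(\<lambda>N. v N) \<longlonglongrightarrow> xt" using onb_expansion[OF onb, of xt] unfolding sums_def v_def xk_def .
    moreover have "isCont L xt" using Lc by (simp add: continuous_on_eq_continuous_at)
    ultimately show ?thesis by (rule isCont_tendsto_compose[rotated])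
  qed
  have limT: "T \<longlonglongrightarrow> 0"
  proof -
    have "T N = (\<Sum>k. (c k)\<^sup>2) - (\<Sum>k<N. (c k)\<^sup>2)" for N
      using suminf_split_initial_segment[OF sc, of N] unfolding T_def by simp
    then have Teq: "T = (\<lambda>N. (\<Sum>k. (c k)\<^sup>2) - (\<Sum>k<N. (c k)\<^sup>2))" by (intro ext)
    moreover have "(\<lambda>N. (\<Sum>k. (c k)\<^sup>2) - (\<Sum>k<N. (c k)\<^sup>2)) \<longlonglongrightarrow> (\<Sum>k. (c k)\<^sup>2) - (\<Sum>k. (c k)\<^sup>2)"
      by (intro tendsto_intros summable_LIMSEQ[OF sc])
    ultimately show ?thesis unfolding Teq by simp
  qed
  have "(\<lambda>N. L (v N) + M / 2 * T N + S / (2 * \<beta>) + lam / 2 * H2) \<longlonglongrightarrow> L xt + M / 2 * 0 + S / (2 * \<beta>) + lam / 2 * H2"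
    by (intro tendsto_intros limv limT)
  then have "X \<le> L xt + M / 2 * 0 + S / (2 * \<beta>) + lam / 2 * H2"
    by (rule LIMSEQ_le_const) (use bound in blast)
  then show ?thesis unfolding LHS X_def[symmetric] S_def H2_def a_def by simp
qed


theorem proposition7:
  fixes f :: "nat \<Rightarrow> 'a::{real_inner,complete_space}" and \<mu> :: "nat \<Rightarrow> real"
  assumes onb: "orthonormal_basis f"
    and mu_pos: "\<And>k. \<mu> k > 0"
    and mu_dec: "decseq \<mu>"
    and A1: "\<exists>c1 c2. c1 > 0 \<and> c2 > 0 \<and>
               (\<forall>k. c1 / (real k + 1)\<^sup>2 \<le> \<mu> k \<and> \<mu> k \<le> c2 / (real k + 1)\<^sup>2)"
  shows "\<exists>C>0. \<forall>(lam::real) (\<beta>::real) (M::real) (L::'a \<Rightarrow> real) (gradL::'a \<Rightarrow> 'a) (xt::'a).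
     lam > 0 \<longrightarrow> \<beta> > 0 \<longrightarrow>
     (\<forall>x. (L has_derivative (\<lambda>h. inner (gradL x) h)) (at x)) \<longrightarrow>
     M-lipschitz_on UNIV gradL \<longrightarrow>
     in_HK \<mu> f xt \<longrightarrow>
     (\<forall>x. in_HK \<mu> f x \<longrightarrow>
        L xt + lam / 2 * (HK_norm \<mu> f xt)\<^sup>2 \<le> L x + lam / 2 * (HK_norm \<mu> f x)\<^sup>2) \<longrightarrow>
     integrable (gauss_ref \<mu> f lam \<beta>) (\<lambda>x. exp (- \<beta> * L x)) \<longrightarrow>
     integrable (gibbs \<mu> f lam \<beta> L) L \<longrightarrow>
     (\<integral>x. L x \<partial>gibbs \<mu> f lam \<beta> L) - L xt
       \<le> C * (1 / \<beta> * (sqrt (2 * M / lam) + 1)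
              + lam * (HK_norm \<mu> f xt / sqrt \<beta> + (HK_norm \<mu> f xt)\<^sup>2))"
proof -
  obtain c2 where c2: "c2 > 0" and mub: "\<And>k. \<mu> k \<le> c2 / (real k + 1)\<^sup>2" using A1 by blast
  have smu: "summable \<mu>"
  proof (rule summable_comparison_test[OF _ summable_mult[OF summable_inv_sq, of c2]], intro exI allI impI)
    fix n :: nat
    show "norm (\<mu> n) \<le> c2 * (1 / (real n + 1)\<^sup>2)" using mub[of n] mu_pos[of n] by simp
  qed
  define C where "C = 9 / 2 * (sqrt (c2 / 2) + 1)"
  have C1: "C \<ge> 1 / 2" unfolding C_def using c2 by simp
  show ?thesis
  proof (rule exI[of _ C], intro conjI allI impI)
    show "C > 0" using C1 by simp
    fix lam \<beta> M :: real and L :: "'a \<Rightarrow> real" and gradL :: "'a \<Rightarrow> 'a" and xt :: 'a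
    assume lam: "lam > 0" and b: "\<beta> > 0"
      and der: "\<forall>x. (L has_derivative (\<lambda>h. inner (gradL x) h)) (at x)"
      and lip: "M-lipschitz_on UNIV gradL"
      and inHK: "in_HK \<mu> f xt"
      and minz: "\<forall>x. in_HK \<mu> f x \<longrightarrow>
        L xt + lam / 2 * (HK_norm \<mu> f xt)\<^sup>2 \<le> L x + lam / 2 * (HK_norm \<mu> f x)\<^sup>2"
      and iW: "integrable (gauss_ref \<mu> f lam \<beta>) (\<lambda>x. exp (- \<beta> * L x))"
      and iL: "integrable (gibbs \<mu> f lam \<beta> L) L"
    have M0: "M \<ge> 0" using lip by (rule lipschitz_on_nonneg)
    define bb where "bb = c2 * M / lam"
    have bb0: "bb \<ge> 0" unfolding bb_def using c2 M0 lam by simp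
    have a0: "0 \<le> M * \<mu> k / lam" for k using M0 mu_pos[of k] lam by simp
    have ab: "M * \<mu> k / lam \<le> bb / (real k + 1)\<^sup>2" for k
    proof -
      have "M * \<mu> k \<le> M * (c2 / (real k + 1)\<^sup>2)" using mub[of k] M0 by (rule mult_left_mono)
      then show ?thesis unfolding bb_def using lam by (simp add: divide_right_mono field_simps)
    qed
    note SB = sum_ln_bound[OF bb0 a0 ab]
    have mb: "(\<integral>x. L x \<partial>gibbs \<mu> f lam \<beta> L)
       \<le> L xt + (\<Sum>k. ln (1 + M * \<mu> k / lam)) / (2 * \<beta>) + lam / 2 * (HK_norm \<mu> f xt)\<^sup>2"
      by (rule main_bound[OF onb mu_pos smu lam b der lip inHK iW iL SB(1)])
    define H where "H = HK_norm \<mu> f xt"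
    have H0: "H \<ge> 0"
    proof -
      have "0 \<le> (\<Sum>k. (inner xt (f k))\<^sup>2 / \<mu> k)"
        using inHK unfolding in_HK_def by (intro suminf_nonneg) (use mu_pos in \<open>auto intro!: divide_nonneg_pos\<close>)
      then show ?thesis unfolding H_def HK_norm_def by simp
    qed
    define w where "w = sqrt (2 * M / lam)"
    have w0: "w \<ge> 0" unfolding w_def using M0 lam by simp
    define t where "t = sqrt (c2 / 2)"
    have t0: "t \<ge> 0" unfolding t_def using c2 by simp
    have sbb: "sqrt bb = t * w" unfolding t_def w_def bb_def by (simp add: real_sqrt_mult[symmetric])
    have "(\<Sum>k. ln (1 + M * \<mu> k / lam)) / (2 * \<beta>) \<le> 9 * (sqrt bb + 1) / (2 * \<beta>)"
      using SB(2) b by (simp add: divide_right_mono)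
    also have "\<dots> = 9 / 2 * (t * w + 1) * (1 / \<beta>)" unfolding sbb by simp
    also have "\<dots> \<le> 9 / 2 * ((t + 1) * (w + 1)) * (1 / \<beta>)"
      using t0 w0 b by (intro mult_right_mono mult_left_mono) (auto simp: algebra_simps)
    also have "\<dots> = C * (1 / \<beta> * (w + 1))" unfolding C_def t_def by simp
    finally have e1: "(\<Sum>k. ln (1 + M * \<mu> k / lam)) / (2 * \<beta>) \<le> C * (1 / \<beta> * (w + 1))" .
    have e2: "lam / 2 * H\<^sup>2 \<le> C * (lam * (H / sqrt \<beta> + H\<^sup>2))"
    proof -
      have "1 / 2 * (lam * H\<^sup>2) \<le> C * (lam * H\<^sup>2)" using C1 lam by (intro mult_right_mono) auto
      then have "lam / 2 * H\<^sup>2 \<le> C * (lam * H\<^sup>2)" by simp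
      also have "\<dots> \<le> C * (lam * (H / sqrt \<beta> + H\<^sup>2))"
        using C1 lam H0 b by (intro mult_left_mono) (auto simp: algebra_simps)
      finally show ?thesis .
    qed
    show "(\<integral>x. L x \<partial>gibbs \<mu> f lam \<beta> L) - L xt
       \<le> C * (1 / \<beta> * (sqrt (2 * M / lam) + 1)
              + lam * (HK_norm \<mu> f xt / sqrt \<beta> + (HK_norm \<mu> f xt)\<^sup>2))"
    proof -
      have "C * (1 / \<beta> * (w + 1) + lam * (H / sqrt \<beta> + H\<^sup>2)) = C * (1 / \<beta> * (w + 1)) + C * (lam * (H / sqrt \<beta> + H\<^sup>2))"
        by (rule distrib_left)
      then show ?thesis using mb e1 e2 unfolding H_def w_def by linarith
    qed
  qed
qed


end
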